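(* Let $F_N(t)$ be a solution of the thermostatted Kac master equation with finite second moments. Then the first moments $d_k(t)=\int_{\mathbb{R}^N}v_kF_N(t,v)\,dv$ converge to $0$ exponentially fast with a rate strictly greater than $\mu/2$, and the mixed second moments $d_{k,l}(t)=\int_{\mathbb{R}^N}v_kv_lF_N(t,v)\,dv$, $k\neq l$, also converge to $0$ exponentially fast with a rate strictly greater than $\mu/2$.
   Context: Fix $N\ge2$, rates $\lambda>0,\mu>0$ and a probability density $g$ on $\mathbb{R}$ with $g\in L^2$, zero mean and finite second moment. The master equation is $\partial_t F_N=-\lambda N(I-Q)[F_N]-\mu\sum_{j=1}^N(I-R_j)[F_N]$, with $Q[F](v)=\binom{N}{2}^{-1}\sum_{i<j}\frac{1}{2\pi}\int_0^{2\pi}F(v_{ij}(\theta))d\theta$ and $R_j[F](v)=\int_{\mathbb{R}}\frac{1}{2\pi}\int_0^{2\pi}g(w\cos\theta-v_j\sin\theta)F(v_j(w,\theta))d\theta dw$, where $v_{ij}(\theta)$ replaces $(v_i,v_j)$ by $(v_i\cos\theta+v_j\sin\theta,-v_i\sin\theta+v_j\cos\theta)$ and $v_j(w,\theta)$ replaces $v_j$ by $v_j\cos\theta+w\sin\theta$. *)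

theory Defs
  imports "HOL-Analysis.Analysis"
begin

text \<open>Velocities are vectors in R^N, N = CARD('n); the index type carries a linear
order so that the sum over pairs i < j makes sense.\<close>

definition upd2 :: "real^'n \<Rightarrow> 'n \<Rightarrow> 'n \<Rightarrow> real \<Rightarrow> real \<Rightarrow> real^'n" where
  "upd2 v i j a b = (\<chi> k. if k = i then a else if k = j then b else v $ k)"

definition upd1 :: "real^'n \<Rightarrow> 'n \<Rightarrow> real \<Rightarrow> real^'n" where
  "upd1 v j a = (\<chi> k. if k = j then a else v $ k)"

definition rot_ij :: "real^'n \<Rightarrow> 'n \<Rightarrow> 'n \<Rightarrow> real \<Rightarrow> real^'n" where
  "rot_ij v i j \<theta> =
     upd2 v i j (v $ i * cos \<theta> + v $ j * sin \<theta>) (- v $ i * sin \<theta> + v $ j * cos \<theta>)"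

definition thermo_j :: "real^'n \<Rightarrow> 'n \<Rightarrow> real \<Rightarrow> real \<Rightarrow> real^'n" where
  "thermo_j v j w \<theta> = upd1 v j (v $ j * cos \<theta> + w * sin \<theta>)"

definition kacQ :: "(real^'n::{finite,linorder} \<Rightarrow> real) \<Rightarrow> real^'n::{finite,linorder} \<Rightarrow> real" where
  "kacQ F v = (1 / real (CARD('n) choose 2)) *
     (\<Sum>(i,j)\<in>{(i,j). i < j}.
        (1 / (2*pi)) * (LINT \<theta>:{0..2*pi}|lborel. F (rot_ij v i j \<theta>)))"

definition thermoR :: "(real \<Rightarrow> real) \<Rightarrow> 'n \<Rightarrow> (real^'n \<Rightarrow> real) \<Rightarrow> real^'n \<Rightarrow> real" where
  "thermoR g j F v = (LINT w|lborel.
     (1 / (2*pi)) * (LINT \<theta>:{0..2*pi}|lborel.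
        g (w * cos \<theta> - v $ j * sin \<theta>) * F (thermo_j v j w \<theta>)))"

definition kac_gen :: "real \<Rightarrow> real \<Rightarrow> (real \<Rightarrow> real) \<Rightarrow>
    (real^'n::{finite,linorder} \<Rightarrow> real) \<Rightarrow> real^'n::{finite,linorder} \<Rightarrow> real" where
  "kac_gen lam \<mu> g F v =
     - lam * real CARD('n) * (F v - kacQ F v) - \<mu> * (\<Sum>j\<in>UNIV. F v - thermoR g j F v)"

definition thermostat_density :: "(real \<Rightarrow> real) \<Rightarrow> bool" where
  "thermostat_density g \<longleftrightarrow>
     (\<forall>x. 0 \<le> g x) \<and> integrable lborel g \<and> (LINT x|lborel. g x) = 1 \<and>
     integrable lborel (\<lambda>x. (g x)\<^sup>2) \<and>
     integrable lborel (\<lambda>x. x * g x) \<and> (LINT x|lborel. x * g x) = 0 \<and>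
     integrable lborel (\<lambda>x. x\<^sup>2 * g x)"

text \<open>Solution with finite second moments: for t \<ge> 0, F t is a probability density
  with finite second moment, and t \<mapsto> F t is differentiable (right-differentiable at 0)
  in the weighted space L^1((1+|v|^2) dv), with derivative given by the master equation.\<close>
definition kac_solution :: "real \<Rightarrow> real \<Rightarrow> (real \<Rightarrow> real) \<Rightarrow>
    (real \<Rightarrow> real^'n::{finite,linorder} \<Rightarrow> real) \<Rightarrow> bool" where
  "kac_solution lam \<mu> g F \<longleftrightarrow>
     (\<forall>t\<ge>0. (\<forall>v. 0 \<le> F t v) \<and> integrable lborel (F t) \<and> (LINT v|lborel. F t v) = 1 \<and>
        integrable lborel (\<lambda>v. (norm v)\<^sup>2 * F t v) \<and>
        integrable lborel (\<lambda>v. (1 + (norm v)\<^sup>2) * kac_gen lam \<mu> g (F t) v) \<and>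
        ((\<lambda>s. (LINT v|lborel. (1 + (norm v)\<^sup>2) *
                 \<bar>F s v - F t v - (s - t) * kac_gen lam \<mu> g (F t) v\<bar>) / \<bar>s - t\<bar>)
           \<longlongrightarrow> 0) (at t within {0..}))"

end

theory Submission
  imports Defs
begin


lemma nn_integral_lborel_translate:
  fixes G :: "real \<Rightarrow> ennreal"
  assumes [measurable]: "G \<in> borel_measurable borel"
  shows "(\<integral>\<^sup>+y. G (y + c) \<partial>lborel) = (\<integral>\<^sup>+y. G y \<partial>lborel)"
proof -
  have "(\<integral>\<^sup>+y. G y \<partial>lborel) = (\<integral>\<^sup>+y. G y \<partial>(distr lborel borel ((+) c)))"
    by (simp add: lborel_distr_plus)
  also have "\<dots> = (\<integral>\<^sup>+y. G (c + y) \<partial>lborel)"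
    by (subst nn_integral_distr) auto
  finally show ?thesis by (simp add: add.commute)
qed

lemma shear_nn:
  fixes h :: "'a::euclidean_space \<Rightarrow> ennreal"
  assumes b1: "b1 \<in> Basis" and b2: "b2 \<in> Basis" and ne: "b1 \<noteq> b2"
    and hm[measurable]: "h \<in> borel_measurable borel"
  shows "(\<integral>\<^sup>+x. h (x + (a * (x \<bullet> b2)) *\<^sub>R b1) \<partial>lborel) = (\<integral>\<^sup>+x. h x \<partial>lborel)"
proof -
  interpret product_sigma_finite "\<lambda>_. lborel::real measure" by standard
  define \<Phi> where "\<Phi> = (\<lambda>f::'a\<Rightarrow>real. \<Sum>b\<in>Basis. f b *\<^sub>R b)"
  have \<Phi>m[measurable]: "\<Phi> \<in> borel_measurable (\<Pi>\<^sub>M b\<in>Basis. lborel)"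
    unfolding \<Phi>_def by measurable
  define I where "I = Basis - {b1}"
  have BI: "Basis = insert b1 I" "finite I" "b1 \<notin> I" using b1 by (auto simp: I_def)
  have inner\<Phi>: "\<Phi> f \<bullet> b2 = f b2" for f
    unfolding \<Phi>_def using b2 by (simp add: inner_sum_left inner_Basis if_distrib cong: if_cong)
  have S\<Phi>: "\<Phi> f + (a * (\<Phi> f \<bullet> b2)) *\<^sub>R b1 = \<Phi> (f(b1 := f b1 + a * f b2))" for f
  proof -
    have "\<Phi> (f(b1 := f b1 + a * f b2)) = (\<Sum>b\<in>Basis. f b *\<^sub>R b + (if b = b1 then (a * f b2) *\<^sub>R b1 else 0))"
      unfolding \<Phi>_def by (intro sum.cong) (auto simp: scaleR_add_left)
    also have "\<dots> = \<Phi> f + (a * f b2) *\<^sub>R b1"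
      unfolding \<Phi>_def using b1 by (simp add: sum.distrib)
    finally show ?thesis by (simp add: inner\<Phi>)
  qed
  have "(\<integral>\<^sup>+x. h (x + (a * (x \<bullet> b2)) *\<^sub>R b1) \<partial>lborel)
      = (\<integral>\<^sup>+f. h (\<Phi> f + (a * (\<Phi> f \<bullet> b2)) *\<^sub>R b1) \<partial>(\<Pi>\<^sub>M b\<in>Basis. lborel))"
    by (subst lborel_eq) (simp add: nn_integral_distr \<Phi>_def)
  also have "\<dots> = (\<integral>\<^sup>+f. h (\<Phi> (f(b1 := f b1 + a * f b2))) \<partial>(\<Pi>\<^sub>M b\<in>Basis. lborel))"
    by (simp add: S\<Phi>)
  also have "\<dots> = (\<integral>\<^sup>+f. \<integral>\<^sup>+y. h (\<Phi> ((f(b1:=y))(b1 := y + a * (f(b1:=y)) b2))) \<partial>lborel \<partial>(\<Pi>\<^sub>M b\<in>I. lborel))"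
  proof -
    have m1: "(\<lambda>g. h (\<Phi> (g(b1 := g b1 + a * g b2)))) \<in> borel_measurable (\<Pi>\<^sub>M b\<in>insert b1 I. lborel)"
      unfolding BI(1)[symmetric] S\<Phi>[symmetric] by measurable
    show ?thesis using product_nn_integral_insert[OF BI(2,3) m1] ne by (simp add: BI(1)[symmetric])
  qed
  also have "\<dots> = (\<integral>\<^sup>+f. \<integral>\<^sup>+y. h (\<Phi> (f(b1 := y + a * f b2))) \<partial>lborel \<partial>(\<Pi>\<^sub>M b\<in>I. lborel))"
    using ne by simp
  also have "\<dots> = (\<integral>\<^sup>+f. \<integral>\<^sup>+y. h (\<Phi> (f(b1 := y))) \<partial>lborel \<partial>(\<Pi>\<^sub>M b\<in>I. lborel))"
  proof (rule nn_integral_cong)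
    fix f :: "'a \<Rightarrow> real" assume "f \<in> space (\<Pi>\<^sub>M b\<in>I. lborel)"
    have upd: "\<Phi> (f(b1 := y)) = \<Phi> f + (y - f b1) *\<^sub>R b1" for y
    proof -
      have "\<Phi> (f(b1 := y)) = (\<Sum>b\<in>Basis. f b *\<^sub>R b + (if b = b1 then (y - f b1) *\<^sub>R b1 else 0))"
        unfolding \<Phi>_def by (intro sum.cong) (auto simp: scaleR_diff_left)
      also have "\<dots> = \<Phi> f + (y - f b1) *\<^sub>R b1"
        unfolding \<Phi>_def using b1 by (simp add: sum.distrib)
      finally show ?thesis .
    qed
    show "(\<integral>\<^sup>+y. h (\<Phi> (f(b1 := y + a * f b2))) \<partial>lborel) = (\<integral>\<^sup>+y. h (\<Phi> (f(b1 := y))) \<partial>lborel)"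
      by (rule nn_integral_lborel_translate[where G="\<lambda>y. h (\<Phi> (f(b1 := y)))"]) (unfold upd, measurable)
  qed
  also have "\<dots> = (\<integral>\<^sup>+f. h (\<Phi> f) \<partial>(\<Pi>\<^sub>M b\<in>Basis. lborel))"
  proof -
    have m1: "(\<lambda>g. h (\<Phi> g)) \<in> borel_measurable (\<Pi>\<^sub>M b\<in>insert b1 I. lborel)"
      unfolding BI(1)[symmetric] by measurable
    show ?thesis using product_nn_integral_insert[OF BI(2,3) m1] by (simp add: BI(1)[symmetric])
  qed
  also have "\<dots> = (\<integral>\<^sup>+x. h x \<partial>lborel)"
    by (subst (2) lborel_eq) (simp add: nn_integral_distr \<Phi>_def)
  finally show ?thesis .
qed



definition shear :: "'a::euclidean_space \<Rightarrow> 'a \<Rightarrow> real \<Rightarrow> 'a \<Rightarrow> 'a" where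
  "shear b1 b2 a x = x + (a * (x \<bullet> b2)) *\<^sub>R b1"

definition rotB :: "'a::euclidean_space \<Rightarrow> 'a \<Rightarrow> real \<Rightarrow> real \<Rightarrow> 'a \<Rightarrow> 'a" where
  "rotB b1 b2 c s x = x + ((c - 1) * (x \<bullet> b1) + s * (x \<bullet> b2)) *\<^sub>R b1 + (- s * (x \<bullet> b1) + (c - 1) * (x \<bullet> b2)) *\<^sub>R b2"

lemma shear_meas[measurable]: "shear b1 b2 a \<in> lborel \<rightarrow>\<^sub>M lborel"
  unfolding shear_def by measurable

lemma shear_meas_borel[measurable]: "shear b1 b2 a \<in> borel_measurable borel"
  unfolding shear_def by measurable

lemma rotB_meas_borel[measurable]: "rotB b1 b2 c s \<in> borel_measurable borel"
  unfolding rotB_def by measurable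

lemma rotB_meas[measurable]: "rotB b1 b2 c s \<in> lborel \<rightarrow>\<^sub>M lborel"
  unfolding rotB_def by measurable

lemma shear_distr:
  assumes "b1 \<in> Basis" "b2 \<in> Basis" "b1 \<noteq> b2"
  shows "distr lborel lborel (shear b1 b2 a) = lborel"
proof (rule measure_eqI)
  fix A assume A: "A \<in> sets (distr lborel lborel (shear b1 b2 a))"
  then have Ab: "A \<in> sets borel" by simp
  have "emeasure (distr lborel lborel (shear b1 b2 a)) A = emeasure lborel (shear b1 b2 a -` A)"
    using A by (subst emeasure_distr) auto
  also have "\<dots> = (\<integral>\<^sup>+x. indicator A (shear b1 b2 a x) \<partial>lborel)"
    using Ab by (subst nn_integral_indicator[symmetric]) (auto simp: indicator_def intro!: measurable_sets_borel[OF _ Ab] intro: nn_integral_cong)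
  also have "\<dots> = (\<integral>\<^sup>+x. indicator A x \<partial>lborel)"
    unfolding shear_def by (rule shear_nn) (use assms Ab in auto)
  also have "\<dots> = emeasure lborel A" using Ab by simp
  finally show "emeasure (distr lborel lborel (shear b1 b2 a)) A = emeasure lborel A" .
qed simp

lemma basis_inner_cases:
  assumes "b1 \<in> Basis" "b2 \<in> Basis" "b1 \<noteq> b2"
  shows "b1 \<bullet> b1 = 1" "b2 \<bullet> b2 = 1" "b1 \<bullet> b2 = 0" "b2 \<bullet> b1 = 0"
  using assms by (auto simp: inner_Basis)

lemma shear_inner:
  assumes "b1 \<in> Basis" "b2 \<in> Basis" "b1 \<noteq> b2" "b \<in> Basis"
  shows "shear b1 b2 a x \<bullet> b = (if b = b1 then x \<bullet> b1 + a * (x \<bullet> b2) else x \<bullet> b)"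
  using assms by (auto simp: shear_def inner_add_left inner_Basis)

lemma rotB_inner:
  assumes "b1 \<in> Basis" "b2 \<in> Basis" "b1 \<noteq> b2" "b \<in> Basis"
  shows "rotB b1 b2 c s x \<bullet> b = (if b = b1 then c * (x \<bullet> b1) + s * (x \<bullet> b2)
      else if b = b2 then - s * (x \<bullet> b1) + c * (x \<bullet> b2) else x \<bullet> b)"
  using assms by (auto simp: rotB_def inner_add_left inner_Basis algebra_simps)

lemma rot_alg:
  fixes c s p q :: real
  assumes cs: "c\<^sup>2 + s\<^sup>2 = 1" and c1: "1 + c \<noteq> 0"
  shows "(p + s/(1+c)*q) + s/(1+c)*(q + (-s)*(p + s/(1+c)*q)) = c*p + s*q"
    and "q + (-s)*(p + s/(1+c)*q) = -s*p + c*q"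
proof -
  have e: "s/(1+c)*(1+c) = s" using c1 by simp
  define t where "t = s/(1+c)"
  have tt: "t * (1 + c) = s" using e by (simp add: t_def)
  show "(p + s/(1+c)*q) + s/(1+c)*(q + (-s)*(p + s/(1+c)*q)) = c*p + s*q"
    using cs tt c1 unfolding t_def[symmetric] by algebra
  show "q + (-s)*(p + s/(1+c)*q) = -s*p + c*q"
    using cs tt c1 unfolding t_def[symmetric] by algebra
qed

lemma rot_as_shears:
  fixes b1 b2 :: "'a::euclidean_space"
  assumes B: "b1 \<in> Basis" "b2 \<in> Basis" "b1 \<noteq> b2" and cs: "c\<^sup>2 + s\<^sup>2 = 1" and c: "c \<noteq> -1"
  shows "rotB b1 b2 c s = shear b1 b2 (s/(1+c)) \<circ> shear b2 b1 (-s) \<circ> shear b1 b2 (s/(1+c))"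
proof
  fix x
  have c1: "1 + c \<noteq> 0" using c by auto
  show "rotB b1 b2 c s x = (shear b1 b2 (s/(1+c)) \<circ> shear b2 b1 (-s) \<circ> shear b1 b2 (s/(1+c))) x"
  proof (rule euclidean_eqI)
    fix b :: 'a assume b: "b \<in> Basis"
    have B': "b2 \<in> Basis" "b1 \<in> Basis" "b2 \<noteq> b1" using B by auto
    show "rotB b1 b2 c s x \<bullet> b = (shear b1 b2 (s/(1+c)) \<circ> shear b2 b1 (-s) \<circ> shear b1 b2 (s/(1+c))) x \<bullet> b"
    proof -
      have n: "b2 \<noteq> b1" using B by auto
      define t where "t = s/(1+c)"
      have i1: "shear b1 b2 a y \<bullet> b1 = y \<bullet> b1 + a * (y \<bullet> b2)" for a y
        using shear_inner[OF B B(1)] by simp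
      have i2: "shear b1 b2 a y \<bullet> b2 = y \<bullet> b2" for a y
        using shear_inner[OF B B(2)] n by simp
      have j1: "shear b2 b1 a y \<bullet> b2 = y \<bullet> b2 + a * (y \<bullet> b1)" for a y
        using shear_inner[OF B' B(2)] by simp
      have j2: "shear b2 b1 a y \<bullet> b1 = y \<bullet> b1" for a y
        using shear_inner[OF B' B(1)] n by simp
      show ?thesis
      proof (cases "b = b1")
        case True
        have "(shear b1 b2 t \<circ> shear b2 b1 (-s) \<circ> shear b1 b2 t) x \<bullet> b1
           = (x\<bullet>b1 + t*(x\<bullet>b2)) + t*((x\<bullet>b2) + (-s)*(x\<bullet>b1 + t*(x\<bullet>b2)))"
          by (simp only: comp_apply i1 i2 j1 j2)
        also have "\<dots> = c*(x\<bullet>b1) + s*(x\<bullet>b2)" unfolding t_def by (rule rot_alg(1)[OF cs c1])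
        finally show ?thesis using True rotB_inner[OF B B(1)] by (simp add: t_def)
      next
        case False
        show ?thesis
        proof (cases "b = b2")
          case True
          have "(shear b1 b2 t \<circ> shear b2 b1 (-s) \<circ> shear b1 b2 t) x \<bullet> b2
             = (x\<bullet>b2) + (-s)*(x\<bullet>b1 + t*(x\<bullet>b2))"
            by (simp only: comp_apply i1 i2 j1 j2)
          also have "\<dots> = -s*(x\<bullet>b1) + c*(x\<bullet>b2)" unfolding t_def by (rule rot_alg(2)[OF cs c1])
          finally show ?thesis using True rotB_inner[OF B B(2)] n by (simp add: t_def)
        next
          case False2: False
          show ?thesis using False False2 rotB_inner[OF B b] shear_inner[OF B b] shear_inner[OF B' b] by simp
        qed
      qed
    qed
  qed
qed

lemma rotB_distr:
  fixes b1 b2 :: "'a::euclidean_space"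
  assumes B: "b1 \<in> Basis" "b2 \<in> Basis" "b1 \<noteq> b2" and cs: "c\<^sup>2 + s\<^sup>2 = 1"
  shows "distr lborel lborel (rotB b1 b2 c s) = lborel"
proof -
  have B': "b2 \<in> Basis" "b1 \<in> Basis" "b2 \<noteq> b1" using B by auto
  have gen: "distr lborel lborel (rotB b1 b2 c' s') = lborel" if cs': "c'\<^sup>2 + s'\<^sup>2 = 1" "c' \<noteq> -1" for c' s'
  proof -
    let ?S1 = "shear b1 b2 (s'/(1+c'))" and ?S2 = "shear b2 b1 (-s')"
    have "distr lborel lborel (rotB b1 b2 c' s') = distr (distr (distr lborel lborel ?S1) lborel ?S2) lborel ?S1"
      by (simp add: distr_distr rot_as_shears[OF B cs'] comp_assoc)
    also have "\<dots> = lborel" by (simp add: shear_distr[OF B] shear_distr[OF B'])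
    finally show ?thesis .
  qed
  show ?thesis
  proof (cases "c = -1")
    case False then show ?thesis using gen[OF cs] by simp
  next
    case True
    then have s0: "s = 0" using cs by (simp add: power2_eq_square)
    have eq: "rotB b1 b2 c s = rotB b1 b2 0 1 \<circ> rotB b1 b2 0 1"
    proof
      fix x show "rotB b1 b2 c s x = (rotB b1 b2 0 1 \<circ> rotB b1 b2 0 1) x"
        by (rule euclidean_eqI) (use B True s0 in \<open>auto simp: rotB_inner\<close>)
    qed
    have "distr lborel lborel (rotB b1 b2 c s) = distr (distr lborel lborel (rotB b1 b2 0 1)) lborel (rotB b1 b2 0 1)"
      by (subst distr_distr) (auto simp: eq)
    also have "\<dots> = lborel" using gen[of 0 1] by simp
    finally show ?thesis .
  qed
qed



lemma ftc02:
  fixes f Fa :: "real \<Rightarrow> real"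
  assumes "\<And>x. (Fa has_real_derivative f x) (at x)" "continuous_on {0..2*pi} f"
  shows "(LINT \<theta>:{0..2*pi}|lborel. f \<theta>) = Fa (2*pi) - Fa 0"
  unfolding set_lebesgue_integral_def
proof (rule integral_FTC_atLeastAtMost)
  show "(Fa has_vector_derivative f x) (at x within {0..2 * pi})" for x
    using assms(1)[of x] by (simp add: has_real_derivative_iff_has_vector_derivative has_vector_derivative_at_within)
qed (use assms in auto)

lemma int_cos: "(LINT \<theta>:{0..2*pi}|lborel. cos \<theta>) = 0"
  by (subst ftc02[where Fa=sin]) (auto intro!: derivative_eq_intros continuous_intros)
lemma int_sin: "(LINT \<theta>:{0..2*pi}|lborel. sin \<theta>) = 0"
  by (subst ftc02[where Fa="\<lambda>x. - cos x"]) (auto intro!: derivative_eq_intros continuous_intros)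
lemma s4: "sin (2*(2*pi)) = 0" using sin_npi[of 4] by (simp add: mult.assoc)
lemma c4: "cos (2*(2*pi)) = 1" using cos_npi[of 4] by (simp add: mult.assoc)
lemma int_cos2: "(LINT \<theta>:{0..2*pi}|lborel. cos (2*\<theta>)) = 0"
  by (subst ftc02[where Fa="\<lambda>x. sin (2*x) / 2"]) (auto intro!: derivative_eq_intros continuous_intros simp: s4)
lemma int_sin2: "(LINT \<theta>:{0..2*pi}|lborel. sin (2*\<theta>)) = 0"
  by (subst ftc02[where Fa="\<lambda>x. - cos (2*x) / 2"]) (auto intro!: derivative_eq_intros continuous_intros simp: c4)
lemma int_one: "(LINT \<theta>:{0..2*pi}|lborel. (1::real)) = 2*pi"
  by (subst ftc02[where Fa="\<lambda>x. x"]) (auto intro!: derivative_eq_intros continuous_intros)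

lemma set_integrable_02:
  assumes "continuous_on {0..2*pi} f"
  shows "integrable lborel (\<lambda>\<theta>. indicator {0..2*pi} \<theta> * (f \<theta>::real))"
  using borel_integrable_atLeastAtMost'[OF assms] unfolding set_integrable_def by simp

lemma avg_lemma:
  fixes T Ti :: "real \<Rightarrow> 'a::euclidean_space \<Rightarrow> 'a" and h \<psi> A B C D E :: "'a \<Rightarrow> real"
  assumes Tm[measurable]: "(\<lambda>p. T (snd p) (fst p)) \<in> borel_measurable (lborel \<Otimes>\<^sub>M lborel)"
    and Tmt[measurable]: "\<And>\<theta>. T \<theta> \<in> lborel \<rightarrow>\<^sub>M lborel"
    and Td: "\<And>\<theta>. distr lborel lborel (T \<theta>) = lborel"
    and inv: "\<And>\<theta> x. Ti \<theta> (T \<theta> x) = x"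
    and hm[measurable]: "h \<in> borel_measurable borel" and hnn: "\<And>x. 0 \<le> h x"
    and \<psi>m[measurable]: "\<psi> \<in> borel_measurable borel"
    and Am[measurable]: "A \<in> borel_measurable borel" and Bm[measurable]: "B \<in> borel_measurable borel"
    and Cm[measurable]: "C \<in> borel_measurable borel" and Dm[measurable]: "D \<in> borel_measurable borel"
    and Em[measurable]: "E \<in> borel_measurable borel"
    and dec: "\<And>\<theta> u. \<psi> (Ti \<theta> u) = A u + cos \<theta> * B u + sin \<theta> * C u + cos (2*\<theta>) * D u + sin (2*\<theta>) * E u"
    and iA: "integrable lborel (\<lambda>u. A u * h u)" and iB: "integrable lborel (\<lambda>u. B u * h u)"
    and iC: "integrable lborel (\<lambda>u. C u * h u)" and iD: "integrable lborel (\<lambda>u. D u * h u)"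
    and iE: "integrable lborel (\<lambda>u. E u * h u)"
  shows "integrable lborel (\<lambda>x. \<psi> x * (LINT \<theta>:{0..2*pi}|lborel. h (T \<theta> x)))"
    and "(LINT x|lborel. \<psi> x * (LINT \<theta>:{0..2*pi}|lborel. h (T \<theta> x))) = 2*pi*(LINT u|lborel. A u * h u)"
proof -
  define G where "G = (\<lambda>p::'a\<times>real. indicator {0..2*pi} (snd p) * (\<psi> (fst p) * h (T (snd p) (fst p))))"
  have Gm[measurable]: "G \<in> borel_measurable (lborel \<Otimes>\<^sub>M lborel)"
    unfolding G_def by measurable
  define R where "R = (\<lambda>u. \<bar>A u * h u\<bar> + \<bar>B u * h u\<bar> + \<bar>C u * h u\<bar> + \<bar>D u * h u\<bar> + \<bar>E u * h u\<bar>)"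
  have iR: "integrable lborel R" unfolding R_def using iA iB iC iD iE by auto
  have Rnn: "0 \<le> R u" for u unfolding R_def by simp
  define K where "K = (\<integral>\<^sup>+u. ennreal (R u) \<partial>lborel)"
  have Kfin: "K < \<infinity>" unfolding K_def using iR Rnn by (simp add: nn_integral_eq_integral)
  have psibound: "\<bar>\<psi> (Ti \<theta> u)\<bar> * h u \<le> R u" for \<theta> u
  proof -
    have "\<bar>\<psi> (Ti \<theta> u)\<bar> * h u \<le> (\<bar>A u\<bar> + \<bar>cos \<theta> * B u\<bar> + \<bar>sin \<theta> * C u\<bar> + \<bar>cos (2*\<theta>) * D u\<bar> + \<bar>sin (2*\<theta>) * E u\<bar>) * h u"
      unfolding dec using hnn[of u] by (intro mult_right_mono) (linarith, simp)
    also have "\<dots> \<le> (\<bar>A u\<bar> + \<bar>B u\<bar> + \<bar>C u\<bar> + \<bar>D u\<bar> + \<bar>E u\<bar>) * h u"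
      using hnn[of u] by (intro mult_right_mono add_mono) (auto simp: abs_mult intro!: mult_left_le_one_le)
    also have "\<dots> = R u" unfolding R_def using hnn[of u] by (simp add: abs_mult distrib_right)
    finally show ?thesis .
  qed
  have inner_nn: "(\<integral>\<^sup>+x. ennreal (\<bar>\<psi> x\<bar> * h (T \<theta> x)) \<partial>lborel) \<le> K" for \<theta>
  proof -
    have "(\<integral>\<^sup>+x. ennreal (\<bar>\<psi> x\<bar> * h (T \<theta> x)) \<partial>lborel)
        = (\<integral>\<^sup>+x. ennreal (\<bar>\<psi> (Ti \<theta> (T \<theta> x))\<bar> * h (T \<theta> x)) \<partial>lborel)"
      by (simp add: inv)
    also have "\<dots> = (\<integral>\<^sup>+u. ennreal (\<bar>\<psi> (Ti \<theta> u)\<bar> * h u) \<partial>distr lborel lborel (T \<theta>))"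
    proof -
      have "(\<lambda>u. ennreal (\<bar>\<psi> (Ti \<theta> u)\<bar> * h u)) = (\<lambda>u. ennreal (\<bar>A u + cos \<theta> * B u + sin \<theta> * C u + cos (2*\<theta>) * D u + sin (2*\<theta>) * E u\<bar> * h u))"
        by (simp add: dec)
      also have "\<dots> \<in> borel_measurable lborel" by measurable
      finally have dm: "(\<lambda>u. ennreal (\<bar>\<psi> (Ti \<theta> u)\<bar> * h u)) \<in> borel_measurable lborel" .
      have dm': "(\<lambda>u. ennreal (\<bar>\<psi> (Ti \<theta> u)\<bar> * h u)) \<in> borel_measurable (distr lborel lborel (T \<theta>))"
        using dm by (simp add: Td)
      show ?thesis using nn_integral_distr[OF Tmt dm'] by simp
    qed
    also have "\<dots> = (\<integral>\<^sup>+u. ennreal (\<bar>\<psi> (Ti \<theta> u)\<bar> * h u) \<partial>lborel)" by (simp add: Td)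
    also have "\<dots> \<le> K" unfolding K_def
      by (rule nn_integral_mono, rule ennreal_leI, rule psibound)
    finally show ?thesis .
  qed
  have "(\<integral>\<^sup>+p. ennreal (norm (G p)) \<partial>(lborel \<Otimes>\<^sub>M lborel))
      = (\<integral>\<^sup>+\<theta>. \<integral>\<^sup>+x. ennreal (norm (G (x,\<theta>))) \<partial>lborel \<partial>lborel)"
    by (rule lborel_pair.nn_integral_snd[symmetric]) measurable
  also have "\<dots> = (\<integral>\<^sup>+\<theta>. indicator {0..2*pi} \<theta> * \<integral>\<^sup>+x. ennreal (\<bar>\<psi> x\<bar> * h (T \<theta> x)) \<partial>lborel \<partial>lborel)"
    by (intro nn_integral_cong) (auto simp: G_def abs_mult hnn indicator_def)
  also have "\<dots> \<le> (\<integral>\<^sup>+\<theta>. indicator {0..2*pi} \<theta> * K \<partial>lborel)"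
    by (intro nn_integral_mono mult_left_mono inner_nn) auto
  also have "\<dots> = K * ennreal (2*pi)"
    by (simp add: nn_integral_cmult_indicator mult.commute)
  also have "\<dots> < \<infinity>" using Kfin by (simp add: ennreal_mult_less_top)
  finally have iG: "integrable (lborel \<Otimes>\<^sub>M lborel) G"
    by (simp add: integrable_iff_bounded)
  have fstG: "(\<integral>\<theta>. G (x,\<theta>) \<partial>lborel) = \<psi> x * (LINT \<theta>:{0..2*pi}|lborel. h (T \<theta> x))" for x
    unfolding G_def set_lebesgue_integral_def
    by (simp add: mult.left_commute[of "indicator _ _"] integral_mult_right_zero)
  show "integrable lborel (\<lambda>x. \<psi> x * (LINT \<theta>:{0..2*pi}|lborel. h (T \<theta> x)))"
    using lborel_pair.integrable_fst'[OF iG] by (simp add: fstG)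
  have sndG: "(\<integral>x. G (x,\<theta>) \<partial>lborel) = indicator {0..2*pi} \<theta> *
      ((LINT u|lborel. A u * h u) + cos \<theta> * (LINT u|lborel. B u * h u) + sin \<theta> * (LINT u|lborel. C u * h u)
       + cos (2*\<theta>) * (LINT u|lborel. D u * h u) + sin (2*\<theta>) * (LINT u|lborel. E u * h u))" for \<theta>
  proof -
    have "(\<integral>x. G (x,\<theta>) \<partial>lborel) = indicator {0..2*pi} \<theta> * (\<integral>x. \<psi> (Ti \<theta> (T \<theta> x)) * h (T \<theta> x) \<partial>lborel)"
      unfolding G_def by (simp add: inv integral_mult_right_zero)
    also have "(\<integral>x. \<psi> (Ti \<theta> (T \<theta> x)) * h (T \<theta> x) \<partial>lborel) = (\<integral>u. \<psi> (Ti \<theta> u) * h u \<partial>distr lborel lborel (T \<theta>))"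
    proof -
      have dm: "(\<lambda>u. \<psi> (Ti \<theta> u) * h u) \<in> borel_measurable lborel"
        unfolding dec by measurable
      have dm': "(\<lambda>u. \<psi> (Ti \<theta> u) * h u) \<in> borel_measurable (distr lborel lborel (T \<theta>))"
        using dm by (simp add: Td)
      show ?thesis using integral_distr[OF Tmt dm] by simp
    qed
    also have "\<dots> = (\<integral>u. (A u * h u + cos \<theta> * (B u * h u) + sin \<theta> * (C u * h u) + cos (2*\<theta>) * (D u * h u) + sin (2*\<theta>) * (E u * h u)) \<partial>lborel)"
      unfolding Td dec by (simp add: algebra_simps)
    also have "\<dots> = (LINT u|lborel. A u * h u) + cos \<theta> * (LINT u|lborel. B u * h u) + sin \<theta> * (LINT u|lborel. C u * h u)
       + cos (2*\<theta>) * (LINT u|lborel. D u * h u) + sin (2*\<theta>) * (LINT u|lborel. E u * h u)"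
      using iA iB iC iD iE by simp
    finally show ?thesis .
  qed
  have "(LINT x|lborel. \<psi> x * (LINT \<theta>:{0..2*pi}|lborel. h (T \<theta> x))) = (\<integral>x. \<integral>\<theta>. G (x,\<theta>) \<partial>lborel \<partial>lborel)"
    by (simp add: fstG)
  also have "\<dots> = integral\<^sup>L (lborel \<Otimes>\<^sub>M lborel) G"
    by (rule lborel_pair.integral_fst'[OF iG])
  also have "\<dots> = (\<integral>\<theta>. \<integral>x. G (x,\<theta>) \<partial>lborel \<partial>lborel)"
    using lborel_pair.integral_snd[of "\<lambda>x \<theta>. G (x,\<theta>)"] iG by simp
  also have "\<dots> = 2*pi*(LINT u|lborel. A u * h u)"
  proof -
    define a where "a = (LINT u|lborel. A u * h u)"
    define b where "b = (LINT u|lborel. B u * h u)"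
    define c where "c = (LINT u|lborel. C u * h u)"
    define d where "d = (LINT u|lborel. D u * h u)"
    define e where "e = (LINT u|lborel. E u * h u)"
    have i1: "integrable lborel (\<lambda>\<theta>. indicator {0..2*pi} \<theta> * (f \<theta>::real))" if "continuous_on UNIV f" for f
      by (rule set_integrable_02) (use that continuous_on_subset in blast)
    have "(\<integral>\<theta>. \<integral>x. G (x,\<theta>) \<partial>lborel \<partial>lborel) =
       (\<integral>\<theta>. a * (indicator {0..2*pi} \<theta> * 1) + b * (indicator {0..2*pi} \<theta> * cos \<theta>) + c * (indicator {0..2*pi} \<theta> * sin \<theta>)
        + d * (indicator {0..2*pi} \<theta> * cos (2*\<theta>)) + e * (indicator {0..2*pi} \<theta> * sin (2*\<theta>)) \<partial>lborel)"
      unfolding sndG a_def b_def c_def d_def e_def by (simp add: algebra_simps)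
    also have "\<dots> = a * (LINT \<theta>:{0..2*pi}|lborel. 1) + b * (LINT \<theta>:{0..2*pi}|lborel. cos \<theta>) + c * (LINT \<theta>:{0..2*pi}|lborel. sin \<theta>)
        + d * (LINT \<theta>:{0..2*pi}|lborel. cos (2*\<theta>)) + e * (LINT \<theta>:{0..2*pi}|lborel. sin (2*\<theta>))"
      unfolding set_lebesgue_integral_def
      by (simp add: i1 continuous_intros)
    also have "\<dots> = 2*pi*a" by (simp add: int_one int_cos int_sin int_cos2 int_sin2)
    finally show ?thesis by (simp add: a_def)
  qed
  finally show "(LINT x|lborel. \<psi> x * (LINT \<theta>:{0..2*pi}|lborel. h (T \<theta> x))) = 2*pi*(LINT u|lborel. A u * h u)" .
qed



lemma rotB_inv:
  fixes b1 b2 :: "'a::euclidean_space"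
  assumes B: "b1 \<in> Basis" "b2 \<in> Basis" "b1 \<noteq> b2" and cs: "c\<^sup>2 + s\<^sup>2 = 1"
  shows "rotB b1 b2 c (-s) (rotB b1 b2 c s x) = x"
proof (rule euclidean_eqI)
  fix b :: 'a assume b: "b \<in> Basis"
  have n: "b2 \<noteq> b1" using B by auto
  have e1: "c * (c * p + s * q) + - s * (- s * p + c * q) = p" for p q
    using cs by algebra
  have e2: "s * (c * p + s * q) + c * (- s * p + c * q) = q" for p q
    using cs by algebra
  show "rotB b1 b2 c (-s) (rotB b1 b2 c s x) \<bullet> b = x \<bullet> b"
    using n e1 e2 by (simp add: rotB_inner[OF B b] rotB_inner[OF B B(1)] rotB_inner[OF B B(2)])
qed

lemma avg_rot:
  fixes b1 b2 :: "'a::euclidean_space" and h \<psi> A B C D E :: "'a \<Rightarrow> real"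
  assumes Bs: "b1 \<in> Basis" "b2 \<in> Basis" "b1 \<noteq> b2"
    and hm[measurable]: "h \<in> borel_measurable borel" and hnn: "\<And>x. 0 \<le> h x"
    and \<psi>m[measurable]: "\<psi> \<in> borel_measurable borel"
    and Am[measurable]: "A \<in> borel_measurable borel" and Bm[measurable]: "B \<in> borel_measurable borel"
    and Cm[measurable]: "C \<in> borel_measurable borel" and Dm[measurable]: "D \<in> borel_measurable borel"
    and Em[measurable]: "E \<in> borel_measurable borel"
    and dec: "\<And>\<theta> u. \<psi> (rotB b1 b2 (cos \<theta>) (- sin \<theta>) u) = A u + cos \<theta> * B u + sin \<theta> * C u + cos (2*\<theta>) * D u + sin (2*\<theta>) * E u"
    and iA: "integrable lborel (\<lambda>u. A u * h u)" and iB: "integrable lborel (\<lambda>u. B u * h u)"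
    and iC: "integrable lborel (\<lambda>u. C u * h u)" and iD: "integrable lborel (\<lambda>u. D u * h u)"
    and iE: "integrable lborel (\<lambda>u. E u * h u)"
  shows "integrable lborel (\<lambda>x. \<psi> x * (LINT \<theta>:{0..2*pi}|lborel. h (rotB b1 b2 (cos \<theta>) (sin \<theta>) x)))"
    and "(LINT x|lborel. \<psi> x * (LINT \<theta>:{0..2*pi}|lborel. h (rotB b1 b2 (cos \<theta>) (sin \<theta>) x))) = 2*pi*(LINT u|lborel. A u * h u)"
proof -
  have Tm: "(\<lambda>p. rotB b1 b2 (cos (snd p)) (sin (snd p)) (fst p)) \<in> borel_measurable (lborel \<Otimes>\<^sub>M lborel)"
    unfolding rotB_def by measurable
  note r = avg_lemma[where T="\<lambda>\<theta>. rotB b1 b2 (cos \<theta>) (sin \<theta>)" and Ti="\<lambda>\<theta>. rotB b1 b2 (cos \<theta>) (- sin \<theta>)",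
      OF Tm rotB_meas rotB_distr[OF Bs] rotB_inv[OF Bs] hm hnn \<psi>m Am Bm Cm Dm Em dec iA iB iC iD iE]
  show "integrable lborel (\<lambda>x. \<psi> x * (LINT \<theta>:{0..2*pi}|lborel. h (rotB b1 b2 (cos \<theta>) (sin \<theta>) x)))"
    using r(1) by simp
  show "(LINT x|lborel. \<psi> x * (LINT \<theta>:{0..2*pi}|lborel. h (rotB b1 b2 (cos \<theta>) (sin \<theta>) x))) = 2*pi*(LINT u|lborel. A u * h u)"
    using r(2) by simp
qed

lemma int_bound_W:
  fixes P W h :: "'a::euclidean_space \<Rightarrow> real"
  assumes [measurable]: "P \<in> borel_measurable borel" "h \<in> borel_measurable borel"
    and iW: "integrable lborel (\<lambda>u. W u * h u)" and hnn: "\<And>u. 0 \<le> h u"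
    and b: "\<And>u. \<bar>P u\<bar> \<le> K * W u"
  shows "integrable lborel (\<lambda>u. P u * h u)"
proof (rule Bochner_Integration.integrable_bound)
  show "integrable lborel (\<lambda>u. K * (W u * h u))" using iW by simp
  show "(\<lambda>u. P u * h u) \<in> borel_measurable lborel" by measurable
  show "AE u in lborel. norm (P u * h u) \<le> norm (K * (W u * h u))"
  proof (rule AE_I2)
    fix u
    have "\<bar>P u * h u\<bar> = \<bar>P u\<bar> * h u" using hnn[of u] by (simp add: abs_mult)
    also have "\<dots> \<le> K * W u * h u" using b[of u] hnn[of u] by (intro mult_right_mono) auto
    also have "\<dots> \<le> \<bar>K * (W u * h u)\<bar>" by (simp add: mult.assoc)
    finally show "norm (P u * h u) \<le> norm (K * (W u * h u))" by simp
  qed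
qed

lemma moment1_avg:
  fixes b1 b2 :: "'a::euclidean_space" and h W xk Ak Bk Ck :: "'a \<Rightarrow> real"
  assumes Bs: "b1 \<in> Basis" "b2 \<in> Basis" "b1 \<noteq> b2"
    and hm[measurable]: "h \<in> borel_measurable borel" and hnn: "\<And>x. 0 \<le> h x"
    and iW: "integrable lborel (\<lambda>u. W u * h u)"
    and [measurable]: "xk \<in> borel_measurable borel" "Ak \<in> borel_measurable borel"
       "Bk \<in> borel_measurable borel" "Ck \<in> borel_measurable borel"
    and dec: "\<And>\<theta> u. xk (rotB b1 b2 (cos \<theta>) (- sin \<theta>) u) = Ak u + cos \<theta> * Bk u + sin \<theta> * Ck u"
    and bA: "\<And>u. \<bar>Ak u\<bar> \<le> W u" and bB: "\<And>u. \<bar>Bk u\<bar> \<le> W u" and bC: "\<And>u. \<bar>Ck u\<bar> \<le> W u"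
  shows "integrable lborel (\<lambda>x. xk x * (LINT \<theta>:{0..2*pi}|lborel. h (rotB b1 b2 (cos \<theta>) (sin \<theta>) x)))"
    and "(LINT x|lborel. xk x * (LINT \<theta>:{0..2*pi}|lborel. h (rotB b1 b2 (cos \<theta>) (sin \<theta>) x))) = 2*pi*(LINT u|lborel. Ak u * h u)"
proof -
  have i: "integrable lborel (\<lambda>u. P u * h u)" if "P \<in> borel_measurable borel" "\<And>u. \<bar>P u\<bar> \<le> 1 * W u" for P
    by (rule int_bound_W[OF that(1) hm iW hnn that(2)])
  have i0: "integrable lborel (\<lambda>u. (\<lambda>_. 0::real) u * h u)" by simp
  note r = avg_rot[OF Bs hm hnn, of xk Ak Bk Ck "\<lambda>_. 0" "\<lambda>_. 0"]
  show "integrable lborel (\<lambda>x. xk x * (LINT \<theta>:{0..2*pi}|lborel. h (rotB b1 b2 (cos \<theta>) (sin \<theta>) x)))"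
    by (rule r(1)) (use dec bA bB bC in \<open>auto intro!: i\<close>)
  show "(LINT x|lborel. xk x * (LINT \<theta>:{0..2*pi}|lborel. h (rotB b1 b2 (cos \<theta>) (sin \<theta>) x))) = 2*pi*(LINT u|lborel. Ak u * h u)"
    by (rule r(2)) (use dec bA bB bC in \<open>auto intro!: i\<close>)
qed

lemma trig_prod:
  fixes c s p1 p2 q1 q2 r1 r2 :: real
  assumes "c = cos \<theta>" "s = sin \<theta>"
  shows "(p1 + c*q1 + s*r1) * (p2 + c*q2 + s*r2) =
    (p1*p2 + (q1*q2 + r1*r2)/2) + c*(p1*q2 + q1*p2) + s*(p1*r2 + r1*p2)
    + cos (2*\<theta>) * ((q1*q2 - r1*r2)/2) + sin (2*\<theta>) * ((q1*r2 + r1*q2)/2)"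
proof -
  have e: "cos (2*\<theta>) = c^2 - s^2" "sin (2*\<theta>) = 2 * s * c" "c^2 + s^2 = 1"
    using assms by (auto simp: cos_double sin_double)
  show ?thesis unfolding e(1,2) using e(3) by algebra
qed

lemma moment2_avg:
  fixes b1 b2 :: "'a::euclidean_space" and h W xk Ak Bk Ck xl Al Bl Cl :: "'a \<Rightarrow> real"
  assumes Bs: "b1 \<in> Basis" "b2 \<in> Basis" "b1 \<noteq> b2"
    and hm[measurable]: "h \<in> borel_measurable borel" and hnn: "\<And>x. 0 \<le> h x"
    and iW: "integrable lborel (\<lambda>u. W u * h u)"
    and [measurable]: "xk \<in> borel_measurable borel" "Ak \<in> borel_measurable borel"
       "Bk \<in> borel_measurable borel" "Ck \<in> borel_measurable borel"
       "xl \<in> borel_measurable borel" "Al \<in> borel_measurable borel"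
       "Bl \<in> borel_measurable borel" "Cl \<in> borel_measurable borel"
    and deck: "\<And>\<theta> u. xk (rotB b1 b2 (cos \<theta>) (- sin \<theta>) u) = Ak u + cos \<theta> * Bk u + sin \<theta> * Ck u"
    and decl: "\<And>\<theta> u. xl (rotB b1 b2 (cos \<theta>) (- sin \<theta>) u) = Al u + cos \<theta> * Bl u + sin \<theta> * Cl u"
    and bd: "\<And>u. \<forall>f\<in>{Ak,Bk,Ck,Al,Bl,Cl}. (f u)\<^sup>2 \<le> W u"
  shows "integrable lborel (\<lambda>x. xk x * xl x * (LINT \<theta>:{0..2*pi}|lborel. h (rotB b1 b2 (cos \<theta>) (sin \<theta>) x)))"
    and "(LINT x|lborel. xk x * xl x * (LINT \<theta>:{0..2*pi}|lborel. h (rotB b1 b2 (cos \<theta>) (sin \<theta>) x)))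
        = 2*pi*(LINT u|lborel. (Ak u * Al u + (Bk u * Bl u + Ck u * Cl u)/2) * h u)"
proof -
  have pb: "\<bar>f u * g u\<bar> \<le> W u" if "f \<in> {Ak,Bk,Ck,Al,Bl,Cl}" "g \<in> {Ak,Bk,Ck,Al,Bl,Cl}" for f g u
  proof -
    have "\<bar>f u * g u\<bar> \<le> ((f u)\<^sup>2 + (g u)\<^sup>2) / 2"
      using sum_squares_bound[of "\<bar>f u\<bar>" "\<bar>g u\<bar>"] by (simp add: abs_mult)
    also have "\<dots> \<le> W u" using bd[of u] that by auto
    finally show ?thesis .
  qed
  have i: "integrable lborel (\<lambda>u. P u * h u)" if "P \<in> borel_measurable borel" "\<And>u. \<bar>P u\<bar> \<le> 2 * W u" for P
    by (rule int_bound_W[OF that(1) hm iW hnn that(2)])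
  have pb2: "\<bar>f u * g u + f' u * g' u\<bar> \<le> 2 * W u"
    if "f \<in> {Ak,Bk,Ck,Al,Bl,Cl}" "g \<in> {Ak,Bk,Ck,Al,Bl,Cl}" "f' \<in> {Ak,Bk,Ck,Al,Bl,Cl}" "g' \<in> {Ak,Bk,Ck,Al,Bl,Cl}" for f g f' g' u
    using pb[OF that(1,2), of u] pb[OF that(3,4), of u] by linarith
  have dec: "xk (rotB b1 b2 (cos \<theta>) (- sin \<theta>) u) * xl (rotB b1 b2 (cos \<theta>) (- sin \<theta>) u) =
    (Ak u * Al u + (Bk u * Bl u + Ck u * Cl u)/2) + cos \<theta> * (Ak u * Bl u + Bk u * Al u) + sin \<theta> * (Ak u * Cl u + Ck u * Al u)
    + cos (2*\<theta>) * ((Bk u * Bl u - Ck u * Cl u)/2) + sin (2*\<theta>) * ((Bk u * Cl u + Ck u * Bl u)/2)" for \<theta> u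
    unfolding deck decl by (rule trig_prod) auto
  note r = avg_rot[OF Bs hm hnn, of "\<lambda>u. xk u * xl u" "\<lambda>u. Ak u * Al u + (Bk u * Bl u + Ck u * Cl u)/2"
     "\<lambda>u. Ak u * Bl u + Bk u * Al u" "\<lambda>u. Ak u * Cl u + Ck u * Al u"
     "\<lambda>u. (Bk u * Bl u - Ck u * Cl u)/2" "\<lambda>u. (Bk u * Cl u + Ck u * Bl u)/2"]
  have ints: "integrable lborel (\<lambda>u. (Ak u * Al u + (Bk u * Bl u + Ck u * Cl u)/2) * h u)"
    "integrable lborel (\<lambda>u. (Ak u * Bl u + Bk u * Al u) * h u)"
    "integrable lborel (\<lambda>u. (Ak u * Cl u + Ck u * Al u) * h u)"
    "integrable lborel (\<lambda>u. ((Bk u * Bl u - Ck u * Cl u)/2) * h u)"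
    "integrable lborel (\<lambda>u. ((Bk u * Cl u + Ck u * Bl u)/2) * h u)"
  proof -
    show "integrable lborel (\<lambda>u. (Ak u * Al u + (Bk u * Bl u + Ck u * Cl u)/2) * h u)"
    proof (rule i)
      fix u show "\<bar>Ak u * Al u + (Bk u * Bl u + Ck u * Cl u)/2\<bar> \<le> 2 * W u"
        using pb[of Ak Al u] pb2[of Bk Bl Ck Cl u] abs_triangle_ineq[of "Ak u * Al u" "(Bk u * Bl u + Ck u * Cl u)/2"] by simp
    qed measurable
    show "integrable lborel (\<lambda>u. (Ak u * Bl u + Bk u * Al u) * h u)"
      by (rule i) (use pb2[of Ak Bl Bk Al] in auto)
    show "integrable lborel (\<lambda>u. (Ak u * Cl u + Ck u * Al u) * h u)"
      by (rule i) (use pb2[of Ak Cl Ck Al] in auto)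
    show "integrable lborel (\<lambda>u. ((Bk u * Bl u - Ck u * Cl u)/2) * h u)"
    proof (rule i)
      fix u show "\<bar>(Bk u * Bl u - Ck u * Cl u)/2\<bar> \<le> 2 * W u"
        using pb[of Bk Bl u] pb[of Ck Cl u] abs_triangle_ineq4[of "Bk u * Bl u" "Ck u * Cl u"] by simp
    qed measurable
    show "integrable lborel (\<lambda>u. ((Bk u * Cl u + Ck u * Bl u)/2) * h u)"
    proof (rule i)
      fix u show "\<bar>(Bk u * Cl u + Ck u * Bl u)/2\<bar> \<le> 2 * W u"
        using pb[of Bk Cl u] pb[of Ck Bl u] abs_triangle_ineq[of "Bk u * Cl u" "Ck u * Bl u"] by simp
    qed measurable
  qed
  show "integrable lborel (\<lambda>x. xk x * xl x * (LINT \<theta>:{0..2*pi}|lborel. h (rotB b1 b2 (cos \<theta>) (sin \<theta>) x)))"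
    using r(1)[OF _ _ _ _ _ _ dec ints] by simp
  show "(LINT x|lborel. xk x * xl x * (LINT \<theta>:{0..2*pi}|lborel. h (rotB b1 b2 (cos \<theta>) (sin \<theta>) x)))
        = 2*pi*(LINT u|lborel. (Ak u * Al u + (Bk u * Bl u + Ck u * Cl u)/2) * h u)"
    using r(2)[OF _ _ _ _ _ _ dec ints] by simp
qed



lemma axis_nth_if: "axis k x $ i = (if i = k then x else 0)"
  by (simp add: axis_def)

lemma axis_ne: "i \<noteq> j \<Longrightarrow> axis i (1::real) \<noteq> axis j 1"
  by (simp add: axis_eq_axis)

lemma rotB_nth:
  fixes u :: "real^'n"
  assumes "i \<noteq> j"
  shows "rotB (axis i 1) (axis j 1) c s u $ k = (if k = i then c * u$i + s * u$j else if k = j then - s * u$i + c * u$j else u$k)"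
  using rotB_inner[of "axis i 1" "axis j 1" "axis k 1" c s u] assms
  by (simp add: axis_ne cart_eq_inner_axis[symmetric] axis_eq_axis)

lemma rot_ij_rotB:
  assumes "i \<noteq> j"
  shows "rot_ij v i j \<theta> = rotB (axis i 1) (axis j 1) (cos \<theta>) (sin \<theta>) v"
  using assms by (auto simp: vec_eq_iff rotB_nth rot_ij_def upd2_def algebra_simps)

lemma vec_nth_meas[measurable]: "(\<lambda>u::real^'n::{finite,linorder}. u $ k) \<in> borel_measurable borel"
  by (intro borel_measurable_continuous_onI continuous_intros)

lemma comp_le_W: "\<bar>(u::real^'n) $ k\<bar> \<le> 1 + (norm u)\<^sup>2"
proof -
  have "\<bar>u $ k\<bar> \<le> norm u" by (rule component_le_norm_cart)
  also have "norm u \<le> 1 + (norm u)\<^sup>2"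
  proof -
    have "0 \<le> (norm u - 1) * (norm u - 1)" by simp
    then have a: "2 * norm u \<le> 1 + norm u * norm u" by (simp add: algebra_simps)
    have b: "0 \<le> norm u * norm u" by simp
    show ?thesis unfolding power2_eq_square using a b by linarith
  qed
  finally show ?thesis .
qed

lemma comp_sq_le_W: "((u::real^'n) $ k)\<^sup>2 \<le> 1 + (norm u)\<^sup>2"
proof -
  have "\<bar>u $ k\<bar> \<le> norm u" by (rule component_le_norm_cart)
  then have "(u $ k)\<^sup>2 \<le> (norm u)\<^sup>2" by (metis abs_ge_zero power2_abs power_mono)
  then show ?thesis by simp
qed

lemma prod_integrable:
  fixes f :: "'a::euclidean_space \<Rightarrow> real" and g :: "'b::euclidean_space \<Rightarrow> real"
  assumes f: "integrable lborel f" and g: "integrable lborel g"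
  shows "integrable lborel (\<lambda>p::'a\<times>'b. f (fst p) * g (snd p))"
    and "(LINT p|lborel. f (fst p) * g (snd p)) = (LINT x|lborel. f x) * (LINT y|lborel. g y)"
proof -
  have [measurable]: "f \<in> borel_measurable borel" "g \<in> borel_measurable borel"
    using f g by auto
  have "(\<integral>\<^sup>+p. ennreal (norm (f (fst p) * g (snd p))) \<partial>(lborel \<Otimes>\<^sub>M lborel))
      = (\<integral>\<^sup>+x. \<integral>\<^sup>+y. ennreal (norm (f x)) * ennreal (norm (g y)) \<partial>lborel \<partial>lborel)"
    by (subst lborel.nn_integral_fst[symmetric]) (auto simp: abs_mult ennreal_mult)
  also have "\<dots> = (\<integral>\<^sup>+x. ennreal (norm (f x)) \<partial>lborel) * (\<integral>\<^sup>+y. ennreal (norm (g y)) \<partial>lborel)"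
    by (simp add: nn_integral_cmult nn_integral_multc)
  also have "\<dots> < \<infinity>" using f g by (simp add: integrable_iff_bounded ennreal_mult_less_top)
  finally have i: "integrable (lborel \<Otimes>\<^sub>M lborel) (\<lambda>p::'a\<times>'b. f (fst p) * g (snd p))"
    by (simp add: integrable_iff_bounded)
  then show "integrable lborel (\<lambda>p::'a\<times>'b. f (fst p) * g (snd p))" by (simp add: lborel_prod)
  have "(LINT p|lborel. f (fst p) * g (snd p)) = integral\<^sup>L (lborel \<Otimes>\<^sub>M lborel) (\<lambda>p::'a\<times>'b. f (fst p) * g (snd p))"
    by (simp add: lborel_prod)
  also have "\<dots> = (\<integral>x. \<integral>y. f x * g y \<partial>lborel \<partial>lborel)"
    using lborel_pair.integral_fst'[OF i] by simp
  also have "\<dots> = (LINT x|lborel. f x) * (LINT y|lborel. g y)"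
    by (simp add: integral_mult_right_zero)
  finally show "(LINT p|lborel. f (fst p) * g (snd p)) = (LINT x|lborel. f x) * (LINT y|lborel. g y)" .
qed

locale dens =
  fixes F0 :: "real^'n::{finite,linorder} \<Rightarrow> real"
  assumes Fm[measurable]: "F0 \<in> borel_measurable borel"
    and Fnn: "\<And>v. 0 \<le> F0 v"
    and Fi: "integrable lborel F0"
    and F2: "integrable lborel (\<lambda>v. (norm v)\<^sup>2 * F0 v)"
begin

lemma FW: "integrable lborel (\<lambda>v. (1 + (norm v)\<^sup>2) * F0 v)"
  using Fi F2 by (simp add: distrib_right)

lemma Q1:
  assumes ij: "i \<noteq> j"
  shows "integrable lborel (\<lambda>v. v$k * (LINT \<theta>:{0..2*pi}|lborel. F0 (rot_ij v i j \<theta>)))"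
    and "(LINT v|lborel. v$k * (LINT \<theta>:{0..2*pi}|lborel. F0 (rot_ij v i j \<theta>)))
          = 2*pi*(if k = i \<or> k = j then 0 else LINT v|lborel. v$k * F0 v)"
proof -
  have Bs: "axis i (1::real) \<in> (Basis :: (real^'n::{finite,linorder}) set)" "axis j (1::real) \<in> (Basis :: (real^'n::{finite,linorder}) set)" "axis i (1::real) \<noteq> axis j 1"
    using ij by (auto simp: axis_ne Basis_real_def)
  define A where "A = (\<lambda>u::real^'n::{finite,linorder}. if k = i \<or> k = j then 0 else u$k)"
  define B where "B = (\<lambda>u::real^'n::{finite,linorder}. if k = i then u$i else if k = j then u$j else 0)"
  define C where "C = (\<lambda>u::real^'n::{finite,linorder}. if k = i then - u$j else if k = j then u$i else 0)"
  have dec: "(rotB (axis i 1) (axis j 1) (cos \<theta>) (- sin \<theta>) u) $ k = A u + cos \<theta> * B u + sin \<theta> * C u" for \<theta> u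
    using ij by (simp add: rotB_nth A_def B_def C_def)
  have bds: "\<bar>A u\<bar> \<le> 1 + (norm u)\<^sup>2" "\<bar>B u\<bar> \<le> 1 + (norm u)\<^sup>2" "\<bar>C u\<bar> \<le> 1 + (norm u)\<^sup>2" for u
    by (auto simp: A_def B_def C_def comp_le_W)
  note r = moment1_avg[OF Bs Fm Fnn FW, of "\<lambda>u. u$k" A B C]
  have ms: "A \<in> borel_measurable borel" "B \<in> borel_measurable borel" "C \<in> borel_measurable borel"
    unfolding A_def B_def C_def by measurable
  show "integrable lborel (\<lambda>v. v$k * (LINT \<theta>:{0..2*pi}|lborel. F0 (rot_ij v i j \<theta>)))"
    using r(1)[OF _ ms dec bds] ij by (simp add: rot_ij_rotB)
  have "(LINT v|lborel. v$k * (LINT \<theta>:{0..2*pi}|lborel. F0 (rot_ij v i j \<theta>))) = 2*pi*(LINT u|lborel. A u * F0 u)"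
    using r(2)[OF _ ms dec bds] ij by (simp add: rot_ij_rotB)
  also have "\<dots> = 2*pi*(if k = i \<or> k = j then 0 else LINT v|lborel. v$k * F0 v)"
    by (simp add: A_def)
  finally show "(LINT v|lborel. v$k * (LINT \<theta>:{0..2*pi}|lborel. F0 (rot_ij v i j \<theta>)))
          = 2*pi*(if k = i \<or> k = j then 0 else LINT v|lborel. v$k * F0 v)" .
qed

lemma Q2:
  assumes ij: "i \<noteq> j" and kl: "k \<noteq> l"
  shows "integrable lborel (\<lambda>v. v$k * v$l * (LINT \<theta>:{0..2*pi}|lborel. F0 (rot_ij v i j \<theta>)))"
    and "(LINT v|lborel. v$k * v$l * (LINT \<theta>:{0..2*pi}|lborel. F0 (rot_ij v i j \<theta>)))
          = 2*pi*(if k = i \<or> k = j \<or> l = i \<or> l = j then 0 else LINT v|lborel. v$k * v$l * F0 v)"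
proof -
  have Bs: "axis i (1::real) \<in> (Basis :: (real^'n::{finite,linorder}) set)" "axis j (1::real) \<in> (Basis :: (real^'n::{finite,linorder}) set)" "axis i (1::real) \<noteq> axis j 1"
    using ij by (auto simp: axis_ne Basis_real_def)
  define A where "A = (\<lambda>k u::real^'n::{finite,linorder}. if k = i \<or> k = j then 0 else u$k)"
  define B where "B = (\<lambda>k u::real^'n::{finite,linorder}. if k = i then u$i else if k = j then u$j else 0)"
  define C where "C = (\<lambda>k u::real^'n::{finite,linorder}. if k = i then - u$j else if k = j then u$i else 0)"
  have dec: "(rotB (axis i 1) (axis j 1) (cos \<theta>) (- sin \<theta>) u) $ m = A m u + cos \<theta> * B m u + sin \<theta> * C m u" for \<theta> u m
    using ij by (simp add: rotB_nth A_def B_def C_def)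
  have bds: "\<forall>f\<in>{A k, B k, C k, A l, B l, C l}. (f u)\<^sup>2 \<le> 1 + (norm u)\<^sup>2" for u
    by (auto simp: A_def B_def C_def comp_sq_le_W)
  have ms: "A m \<in> borel_measurable borel" "B m \<in> borel_measurable borel" "C m \<in> borel_measurable borel" for m
    unfolding A_def B_def C_def by measurable
  note r = moment2_avg[OF Bs Fm Fnn FW, of "\<lambda>u. u$k" "A k" "B k" "C k" "\<lambda>u. u$l" "A l" "B l" "C l",
      OF _ ms(1,2,3) _ ms(1,2,3) dec dec bds]
  show "integrable lborel (\<lambda>v. v$k * v$l * (LINT \<theta>:{0..2*pi}|lborel. F0 (rot_ij v i j \<theta>)))"
    using r(1) ij by (simp add: rot_ij_rotB)
  have e: "(A k u * A l u + (B k u * B l u + C k u * C l u)/2) = (if k = i \<or> k = j \<or> l = i \<or> l = j then 0 else u$k * u$l)" for u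
    using ij kl by (auto simp: A_def B_def C_def)
  have "(LINT v|lborel. v$k * v$l * (LINT \<theta>:{0..2*pi}|lborel. F0 (rot_ij v i j \<theta>)))
      = 2*pi*(LINT u|lborel. (A k u * A l u + (B k u * B l u + C k u * C l u)/2) * F0 u)"
    using r(2) ij by (simp add: rot_ij_rotB)
  also have "\<dots> = 2*pi*(if k = i \<or> k = j \<or> l = i \<or> l = j then 0 else LINT v|lborel. v$k * v$l * F0 v)"
    unfolding e by simp
  finally show "(LINT v|lborel. v$k * v$l * (LINT \<theta>:{0..2*pi}|lborel. F0 (rot_ij v i j \<theta>)))
          = 2*pi*(if k = i \<or> k = j \<or> l = i \<or> l = j then 0 else LINT v|lborel. v$k * v$l * F0 v)" .
qed

end

locale dens_g = dens F0 for F0 :: "real^'n::{finite,linorder} \<Rightarrow> real" +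
  fixes g :: "real \<Rightarrow> real"
  assumes gm[measurable]: "g \<in> borel_measurable borel"
    and gnn: "\<And>x. 0 \<le> g x"
    and gi: "integrable lborel g"
    and g1: "(LINT x|lborel. g x) = 1"
    and g2: "integrable lborel (\<lambda>x. x\<^sup>2 * g x)"
begin

definition b1 :: "'n \<Rightarrow> (real^'n::{finite,linorder}) \<times> real" where "b1 j = (axis j 1, 0)"
definition b2 :: "(real^'n::{finite,linorder}) \<times> real" where "b2 = (0, 1)"

lemma b_basis: "b1 j \<in> Basis" "b2 \<in> Basis" "b1 j \<noteq> b2"
  by (auto simp: b1_def b2_def Basis_prod_def Basis_real_def)

lemma rotB_th: "rotB (b1 j) b2 c s (u, w) = ((\<chi> k. if k = j then c * u$j + s * w else u$k), - s * u$j + c * w)"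
  by (auto simp: rotB_def b1_def b2_def vec_eq_iff inner_axis algebra_simps axis_nth_if)

definition H :: "(real^'n::{finite,linorder}) \<times> real \<Rightarrow> real" where "H p = F0 (fst p) * g (snd p)"

lemma Hm[measurable]: "H \<in> borel_measurable borel"
proof -
  have "(\<lambda>p. F0 (fst p) * g (snd p)) \<in> borel_measurable (borel \<Otimes>\<^sub>M borel)" by measurable
  then show ?thesis by (simp add: H_def[abs_def] borel_prod)
qed
lemma Hnn: "0 \<le> H p" unfolding H_def using Fnn gnn by simp

lemma thermoR_eq: "thermoR g j F0 v = (LINT w|lborel. (1/(2*pi)) * (LINT \<theta>:{0..2*pi}|lborel. H (rotB (b1 j) b2 (cos \<theta>) (sin \<theta>) (v, w))))"
proof -
  have th: "thermo_j v j w \<theta> = (\<chi> k. if k = j then cos \<theta> * v $ j + sin \<theta> * w else v $ k)" for w \<theta>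
    by (simp add: thermo_j_def upd1_def vec_eq_iff mult.commute)
  have pt: "g (w * cos \<theta> - v $ j * sin \<theta>) * F0 (thermo_j v j w \<theta>) = H (rotB (b1 j) b2 (cos \<theta>) (sin \<theta>) (v, w))" for w \<theta>
    unfolding th rotB_th H_def by (simp add: algebra_simps)
  show ?thesis unfolding thermoR_def pt ..
qed

definition W :: "(real^'n::{finite,linorder}) \<times> real \<Rightarrow> real" where "W p = (1 + (norm (fst p))\<^sup>2) * (1 + (snd p)\<^sup>2)"

lemma iWH: "integrable lborel (\<lambda>p. W p * H p)"
proof -
  have "integrable lborel (\<lambda>x. (1 + x\<^sup>2) * g x)" using gi g2 by (simp add: distrib_right)
  from prod_integrable(1)[OF FW this] show ?thesis
    by (simp add: W_def H_def mult_ac)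
qed

lemma W_ge: "1 + (norm (fst p))\<^sup>2 \<le> W p" "1 + (snd p)\<^sup>2 \<le> W p"
proof -
  have a: "0 \<le> (1 + (norm (fst p))\<^sup>2) * (snd p)\<^sup>2" "0 \<le> (norm (fst p))\<^sup>2 * (1 + (snd p)\<^sup>2)" by auto
  show "1 + (norm (fst p))\<^sup>2 \<le> W p"
    using a(1) by (simp add: W_def distrib_left)
  show "1 + (snd p)\<^sup>2 \<le> W p"
    using a(2) by (simp add: W_def distrib_right)
qed

lemma abs_le_sq1: "\<bar>x::real\<bar> \<le> 1 + x\<^sup>2"
proof -
  have "0 \<le> (\<bar>x\<bar> - 1) * (\<bar>x\<bar> - 1)" by simp
  then have a: "2 * \<bar>x\<bar> \<le> 1 + \<bar>x\<bar> * \<bar>x\<bar>" by (simp add: algebra_simps)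
  have b: "0 \<le> \<bar>x\<bar> * \<bar>x\<bar>" by simp
  show ?thesis unfolding power2_eq_square using a b by (simp add: abs_mult_self_eq)
qed

lemma int_AH:
  assumes "\<And>u w. A (u, w) = a u" and [measurable]: "a \<in> borel_measurable borel"
    and ia: "integrable lborel (\<lambda>u. a u * F0 u)"
  shows "(LINT p|lborel. A p * H p) = (LINT u|lborel. a u * F0 u)"
proof -
  have "(LINT p|lborel. A p * H p) = (LINT p|lborel. (a (fst p) * F0 (fst p)) * g (snd p))"
  proof -
    have "A p = a (fst p)" for p using assms(1)[of "fst p" "snd p"] by simp
    then show ?thesis by (simp add: H_def mult_ac)
  qed
  also have "\<dots> = (LINT u|lborel. a u * F0 u)"
    using prod_integrable(2)[OF ia gi] g1 by simp
  finally show ?thesis .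
qed

definition Lth :: "'n \<Rightarrow> (real^'n::{finite,linorder}) \<times> real \<Rightarrow> real" where
  "Lth j p = (LINT \<theta>:{0..2*pi}|lborel. H (rotB (b1 j) b2 (cos \<theta>) (sin \<theta>) p))"

lemma thermo_fub:
  fixes \<phi> :: "real^'n::{finite,linorder} \<Rightarrow> real"
  assumes i: "integrable lborel (\<lambda>p. \<phi> (fst p) * Lth j p)"
  shows "integrable lborel (\<lambda>v. \<phi> v * thermoR g j F0 v)"
    and "(LINT v|lborel. \<phi> v * thermoR g j F0 v) = (1/(2*pi)) * (LINT p|lborel. \<phi> (fst p) * Lth j p)"
proof -
  have i2: "integrable (lborel \<Otimes>\<^sub>M lborel) (\<lambda>p. \<phi> (fst p) * Lth j p)"
    using i by (simp add: lborel_prod)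
  have e: "\<phi> v * thermoR g j F0 v = (1/(2*pi)) * (\<integral>w. \<phi> (fst (v,w)) * Lth j (v, w) \<partial>lborel)" for v
    unfolding thermoR_eq Lth_def by (simp add: integral_mult_right_zero)
  show "integrable lborel (\<lambda>v. \<phi> v * thermoR g j F0 v)"
    unfolding e using lborel_pair.integrable_fst'[OF i2] by simp
  have "(LINT v|lborel. \<phi> v * thermoR g j F0 v) = (1/(2*pi)) * (\<integral>v. \<integral>w. \<phi> (fst (v,w)) * Lth j (v, w) \<partial>lborel \<partial>lborel)"
    unfolding e by simp
  also have "(\<integral>v. \<integral>w. \<phi> (fst (v,w)) * Lth j (v, w) \<partial>lborel \<partial>lborel) = integral\<^sup>L (lborel \<Otimes>\<^sub>M lborel) (\<lambda>p. \<phi> (fst p) * Lth j p)"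
    using lborel_pair.integral_fst'[OF i2] by simp
  also have "\<dots> = (LINT p|lborel. \<phi> (fst p) * Lth j p)" by (simp add: lborel_prod)
  finally show "(LINT v|lborel. \<phi> v * thermoR g j F0 v) = (1/(2*pi)) * (LINT p|lborel. \<phi> (fst p) * Lth j p)" .
qed

lemma rotB_th': "rotB (b1 j) b2 c s p = ((\<chi> k. if k = j then c * (fst p)$j + s * snd p else (fst p)$k), - s * (fst p)$j + c * snd p)"
  using rotB_th[of j c s "fst p" "snd p"] by simp

lemma fst_nth_meas[measurable]: "(\<lambda>p::(real^'n::{finite,linorder}) \<times> real. (fst p)$k) \<in> borel_measurable borel"
  by (intro borel_measurable_continuous_onI continuous_intros)

lemma snd_meas'[measurable]: "(\<lambda>p::(real^'n::{finite,linorder}) \<times> real. snd p) \<in> borel_measurable borel"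
  by (intro borel_measurable_continuous_onI continuous_intros)

lemma compW: "\<bar>(fst p)$k\<bar> \<le> W p" "\<bar>snd p\<bar> \<le> W p" "((fst p)$k)\<^sup>2 \<le> W p" "(snd p)\<^sup>2 \<le> W p"
  using comp_le_W[of "fst p" k] comp_sq_le_W[of "fst p" k] abs_le_sq1[of "snd p"] W_ge[of p] by auto

lemma ia_comp: "integrable lborel (\<lambda>u. (u::real^'n::{finite,linorder})$k * F0 u)"
  by (rule int_bound_W[OF _ Fm FW Fnn, of _ 1]) (auto simp: comp_le_W)

lemma ia_comp2: "integrable lborel (\<lambda>u. (u::real^'n::{finite,linorder})$k * u$l * F0 u)"
proof (rule int_bound_W[OF _ Fm FW Fnn, of _ 1])
  fix u :: "real^'n::{finite,linorder}"
  have "\<bar>u$k * u$l\<bar> \<le> ((u$k)\<^sup>2 + (u$l)\<^sup>2)/2"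
    using sum_squares_bound[of "\<bar>u$k\<bar>" "\<bar>u$l\<bar>"] by (simp add: abs_mult)
  also have "\<dots> \<le> 1 + (norm u)\<^sup>2" using comp_sq_le_W[of u k] comp_sq_le_W[of u l] by simp
  finally show "\<bar>u$k * u$l\<bar> \<le> 1 * (1 + (norm u)\<^sup>2)" by simp
qed measurable

lemma R1:
  shows "integrable lborel (\<lambda>v. v$k * thermoR g j F0 v)"
    and "(LINT v|lborel. v$k * thermoR g j F0 v) = (if k = j then 0 else LINT v|lborel. v$k * F0 v)"
proof -
  define A where "A = (\<lambda>p::(real^'n::{finite,linorder}) \<times> real. if k = j then 0 else (fst p)$k)"
  define B where "B = (\<lambda>p::(real^'n::{finite,linorder}) \<times> real. if k = j then (fst p)$j else 0)"
  define C where "C = (\<lambda>p::(real^'n::{finite,linorder}) \<times> real. if k = j then - snd p else 0)"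
  have dec: "(fst (rotB (b1 j) b2 (cos \<theta>) (- sin \<theta>) p)) $ k = A p + cos \<theta> * B p + sin \<theta> * C p" for \<theta> p
    by (simp add: rotB_th' A_def B_def C_def)
  have bds: "\<bar>A p\<bar> \<le> W p" "\<bar>B p\<bar> \<le> W p" "\<bar>C p\<bar> \<le> W p" for p
    using compW[of p] W_ge[of p] by (auto simp: A_def B_def C_def)
  have ms: "A \<in> borel_measurable borel" "B \<in> borel_measurable borel" "C \<in> borel_measurable borel"
    unfolding A_def B_def C_def by measurable
  note r = moment1_avg[OF b_basis Hm Hnn iWH, of "\<lambda>p. (fst p)$k" A B C, OF _ ms dec bds]
  have i: "integrable lborel (\<lambda>p. (fst p)$k * Lth j p)" using r(1) by (simp add: Lth_def)
  note f = thermo_fub[OF i]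
  show "integrable lborel (\<lambda>v. v$k * thermoR g j F0 v)" by (rule f(1))
  have "(LINT v|lborel. v$k * thermoR g j F0 v) = (1/(2*pi)) * (2*pi * (LINT p|lborel. A p * H p))"
    using f(2) r(2) by (simp add: Lth_def)
  also have "\<dots> = (LINT p|lborel. A p * H p)" by simp
  also have "\<dots> = (LINT u|lborel. (if k = j then 0 else u$k) * F0 u)"
  proof -
    have m: "(\<lambda>u::real^'n::{finite,linorder}. if k = j then 0 else u$k) \<in> borel_measurable borel" by measurable
    have ii: "integrable lborel (\<lambda>u. (if k = j then 0 else u$k) * F0 u)"
      by (cases "k = j") (simp_all add: ia_comp)
    show ?thesis by (rule int_AH[OF _ m ii]) (simp add: A_def)
  qed
  also have "\<dots> = (if k = j then 0 else LINT v|lborel. v$k * F0 v)" by simp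
  finally show "(LINT v|lborel. v$k * thermoR g j F0 v) = (if k = j then 0 else LINT v|lborel. v$k * F0 v)" .
qed

lemma R2:
  assumes kl: "k \<noteq> l"
  shows "integrable lborel (\<lambda>v. v$k * v$l * thermoR g j F0 v)"
    and "(LINT v|lborel. v$k * v$l * thermoR g j F0 v) = (if k = j \<or> l = j then 0 else LINT v|lborel. v$k * v$l * F0 v)"
proof -
  define A where "A = (\<lambda>k p::(real^'n::{finite,linorder}) \<times> real. if k = j then 0 else (fst p)$k)"
  define B where "B = (\<lambda>k p::(real^'n::{finite,linorder}) \<times> real. if k = j then (fst p)$j else 0)"
  define C where "C = (\<lambda>k p::(real^'n::{finite,linorder}) \<times> real. if k = j then - snd p else 0)"
  have dec: "(fst (rotB (b1 j) b2 (cos \<theta>) (- sin \<theta>) p)) $ m = A m p + cos \<theta> * B m p + sin \<theta> * C m p" for \<theta> p m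
    by (simp add: rotB_th' A_def B_def C_def)
  have bds: "\<forall>f\<in>{A k, B k, C k, A l, B l, C l}. (f p)\<^sup>2 \<le> W p" for p
    using compW[of p] W_ge[of p] by (auto simp: A_def B_def C_def)
  have ms: "A m \<in> borel_measurable borel" "B m \<in> borel_measurable borel" "C m \<in> borel_measurable borel" for m
    unfolding A_def B_def C_def by measurable
  note r = moment2_avg[OF b_basis Hm Hnn iWH, of "\<lambda>p. (fst p)$k" "A k" "B k" "C k" "\<lambda>p. (fst p)$l" "A l" "B l" "C l",
      OF _ ms(1,2,3) _ ms(1,2,3) dec dec bds]
  have i: "integrable lborel (\<lambda>p. (\<lambda>v. v$k * v$l) (fst p) * Lth j p)" using r(1) by (simp add: Lth_def)
  note f = thermo_fub[OF i]
  show "integrable lborel (\<lambda>v. v$k * v$l * thermoR g j F0 v)" using f(1) by simp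
  have e: "(A k p * A l p + (B k p * B l p + C k p * C l p)/2) = (if k = j \<or> l = j then 0 else (fst p)$k * (fst p)$l)" for p
    using kl by (auto simp: A_def B_def C_def)
  have "(LINT v|lborel. v$k * v$l * thermoR g j F0 v) = (1/(2*pi)) * (2*pi * (LINT p|lborel. (A k p * A l p + (B k p * B l p + C k p * C l p)/2) * H p))"
    using f(2) r(2) by (simp add: Lth_def)
  also have "\<dots> = (LINT p|lborel. (A k p * A l p + (B k p * B l p + C k p * C l p)/2) * H p)" by simp
  also have "\<dots> = (LINT u|lborel. (if k = j \<or> l = j then 0 else u$k * u$l) * F0 u)"
  proof -
    have m: "(\<lambda>u::real^'n::{finite,linorder}. if k = j \<or> l = j then 0 else u$k * u$l) \<in> borel_measurable borel" by measurable
    have ii: "integrable lborel (\<lambda>u. (if k = j \<or> l = j then 0 else u$k * u$l) * F0 u)"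
      by (cases "k = j \<or> l = j") (simp_all add: ia_comp2)
    show ?thesis unfolding e by (rule int_AH[OF _ m ii]) simp
  qed
  also have "\<dots> = (if k = j \<or> l = j then 0 else LINT v|lborel. v$k * v$l * F0 v)" by simp
  finally show "(LINT v|lborel. v$k * v$l * thermoR g j F0 v) = (if k = j \<or> l = j then 0 else LINT v|lborel. v$k * v$l * F0 v)" .
qed

definition LQ :: "'n \<Rightarrow> 'n \<Rightarrow> real^'n::{finite,linorder} \<Rightarrow> real" where
  "LQ i j v = (LINT \<theta>:{0..2*pi}|lborel. F0 (rot_ij v i j \<theta>))"

lemma kacQ_sum: "kacQ F0 v = (\<Sum>p\<in>{(i,j). i < j}. (1 / real (CARD('n) choose 2)) * (1/(2*pi)) * LQ (fst p) (snd p) v)"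
  unfolding kacQ_def LQ_def by (simp add: sum_distrib_left case_prod_beta)

lemma kacQ_gen:
  fixes \<phi> :: "real^'n::{finite,linorder} \<Rightarrow> real" and T :: "'n \<times> 'n \<Rightarrow> bool" and M :: real
  assumes ii: "\<And>i j. i \<noteq> j \<Longrightarrow> integrable lborel (\<lambda>v. \<phi> v * LQ i j v)"
    and ie: "\<And>i j. i \<noteq> j \<Longrightarrow> (LINT v|lborel. \<phi> v * LQ i j v) = 2*pi*(if T (i,j) then 0 else M)"
  shows "integrable lborel (\<lambda>v. \<phi> v * kacQ F0 v)"
    and "(LINT v|lborel. \<phi> v * kacQ F0 v) = (real (card {p\<in>{(i,j). i < j}. \<not> T p}) / real (CARD('n) choose 2)) * M"
proof -
  let ?P = "{(i,j). i < j} :: ('n \<times> 'n) set"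
  let ?b = "real (CARD('n) choose 2)"
  have e: "\<phi> v * kacQ F0 v = (\<Sum>p\<in>?P. (1/?b) * (1/(2*pi)) * (\<phi> v * LQ (fst p) (snd p) v))" for v
    unfolding kacQ_sum by (simp add: sum_distrib_left mult_ac)
  have ip: "integrable lborel (\<lambda>v. (1/?b) * (1/(2*pi)) * (\<phi> v * LQ (fst p) (snd p) v))" if "p \<in> ?P" for p
    using ii[of "fst p" "snd p"] that by auto
  show "integrable lborel (\<lambda>v. \<phi> v * kacQ F0 v)"
    unfolding e by (rule Bochner_Integration.integrable_sum) (use ip in blast)
  have "(LINT v|lborel. \<phi> v * kacQ F0 v) = (\<Sum>p\<in>?P. (LINT v|lborel. (1/?b) * (1/(2*pi)) * (\<phi> v * LQ (fst p) (snd p) v)))"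
    unfolding e by (rule Bochner_Integration.integral_sum) (use ip in blast)
  also have "\<dots> = (\<Sum>p\<in>?P. (1/?b) * (if T p then 0 else M))"
  proof (rule sum.cong)
    fix p assume p: "p \<in> ?P"
    then have "fst p \<noteq> snd p" by auto
    then show "(LINT v|lborel. (1/?b) * (1/(2*pi)) * (\<phi> v * LQ (fst p) (snd p) v)) = (1/?b) * (if T p then 0 else M)"
      using ie[of "fst p" "snd p"] by simp
  qed simp
  also have "\<dots> = (1/?b) * (\<Sum>p\<in>?P. (if T p then 0 else M))" by (simp add: sum_distrib_left)
  also have "(\<Sum>p\<in>?P. (if T p then 0 else M)) = (\<Sum>p\<in>?P. (if \<not> T p then M else 0))"
    by (intro sum.cong) auto
  also have "\<dots> = (\<Sum>p\<in>{p\<in>?P. \<not> T p}. M)"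
    by (rule sum.inter_filter[symmetric]) simp
  also have "\<dots> = real (card {p\<in>?P. \<not> T p}) * M" by simp
  finally show "(LINT v|lborel. \<phi> v * kacQ F0 v) = (real (card {p\<in>{(i,j). i < j}. \<not> T p}) / real (CARD('n) choose 2)) * M"
    by simp
qed

lemma kacQ_mom1:
  shows "integrable lborel (\<lambda>v. v$k * kacQ F0 v)"
    and "(LINT v|lborel. v$k * kacQ F0 v) = (real (card {p\<in>{(i,j). i < j}. \<not> (k = fst p \<or> k = snd p)}) / real (CARD('n) choose 2)) * (LINT v|lborel. v$k * F0 v)"
  using kacQ_gen[of "\<lambda>v. v$k" "\<lambda>p. k = fst p \<or> k = snd p" "LINT v|lborel. v$k * F0 v"] Q1
  by (auto simp: LQ_def)

lemma kacQ_mom2: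
  assumes "k \<noteq> l"
  shows "integrable lborel (\<lambda>v. v$k * v$l * kacQ F0 v)"
    and "(LINT v|lborel. v$k * v$l * kacQ F0 v) = (real (card {p\<in>{(i,j). i < j}. \<not> (k = fst p \<or> k = snd p \<or> l = fst p \<or> l = snd p)}) / real (CARD('n) choose 2)) * (LINT v|lborel. v$k * v$l * F0 v)"
  using kacQ_gen[of "\<lambda>v. v$k * v$l" "\<lambda>p. k = fst p \<or> k = snd p \<or> l = fst p \<or> l = snd p" "LINT v|lborel. v$k * v$l * F0 v"] Q2[OF _ assms]
  by (auto simp: LQ_def)

lemma gen1:
  "(LINT v|lborel. v$k * kac_gen lam \<mu> g F0 v) =
    - (lam * real CARD('n) * (1 - real (card {p\<in>{(i,j). i < j}. \<not> (k = fst p \<or> k = snd p)}) / real (CARD('n) choose 2)) + \<mu>)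
      * (LINT v|lborel. v$k * F0 v)"
proof -
  let ?q = "real (card {p\<in>{(i,j). i < j}. \<not> (k = fst p \<or> k = snd p)}) / real (CARD('n) choose 2)"
  let ?M = "LINT v|lborel. v$k * F0 v"
  have eq: "(\<lambda>v. v$k * kac_gen lam \<mu> g F0 v) = (\<lambda>v. -(lam * real CARD('n)) * (v$k * F0 v - v$k * kacQ F0 v)
      - \<mu> * (\<Sum>j\<in>UNIV. v$k * F0 v - v$k * thermoR g j F0 v))"
    by (rule ext) (simp add: kac_gen_def algebra_simps sum_distrib_left sum_subtractf)
  have i1: "integrable lborel (\<lambda>v. v$k * F0 v)" by (rule ia_comp)
  note i2 = kacQ_mom1(1)[of k]
  have i3: "integrable lborel (\<lambda>v. v$k * F0 v - v$k * thermoR g j F0 v)" for j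
    using i1 R1(1)[of k j] by simp
  have "(LINT v|lborel. v$k * kac_gen lam \<mu> g F0 v) = -(lam * real CARD('n)) * (?M - (LINT v|lborel. v$k * kacQ F0 v))
      - \<mu> * (\<Sum>j\<in>UNIV. ?M - (LINT v|lborel. v$k * thermoR g j F0 v))"
    unfolding eq using i1 i2 i3 R1(1)[of k]
    by (simp add: Bochner_Integration.integral_sum Bochner_Integration.integrable_sum)
  also have "\<dots> = -(lam * real CARD('n)) * (?M - ?q * ?M) - \<mu> * (\<Sum>j\<in>UNIV. if j = k then ?M else 0)"
    unfolding kacQ_mom1(2) R1(2) by (intro arg_cong2[where f="(-)"] refl arg_cong2[where f="(*)"] sum.cong) auto
  also have "\<dots> = - (lam * real CARD('n) * (1 - ?q) + \<mu>) * ?M"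
    by (simp add: algebra_simps)
  finally show ?thesis .
qed

lemma gen2:
  assumes kl: "k \<noteq> l"
  shows "(LINT v|lborel. v$k * v$l * kac_gen lam \<mu> g F0 v) =
    - (lam * real CARD('n) * (1 - real (card {p\<in>{(i,j). i < j}. \<not> (k = fst p \<or> k = snd p \<or> l = fst p \<or> l = snd p)}) / real (CARD('n) choose 2)) + 2 * \<mu>)
      * (LINT v|lborel. v$k * v$l * F0 v)"
proof -
  let ?q = "real (card {p\<in>{(i,j). i < j}. \<not> (k = fst p \<or> k = snd p \<or> l = fst p \<or> l = snd p)}) / real (CARD('n) choose 2)"
  let ?M = "LINT v|lborel. v$k * v$l * F0 v"
  have eq: "(\<lambda>v. v$k * v$l * kac_gen lam \<mu> g F0 v) = (\<lambda>v. -(lam * real CARD('n)) * (v$k * v$l * F0 v - v$k * v$l * kacQ F0 v)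
      - \<mu> * (\<Sum>j\<in>UNIV. v$k * v$l * F0 v - v$k * v$l * thermoR g j F0 v))"
    by (rule ext) (simp add: kac_gen_def algebra_simps sum_distrib_left sum_subtractf)
  have i1: "integrable lborel (\<lambda>v. v$k * v$l * F0 v)" by (rule ia_comp2)
  note i2 = kacQ_mom2(1)[OF kl]
  have i3: "integrable lborel (\<lambda>v. v$k * v$l * F0 v - v$k * v$l * thermoR g j F0 v)" for j
    using i1 R2(1)[OF kl, of j] by simp
  have "(LINT v|lborel. v$k * v$l * kac_gen lam \<mu> g F0 v) = -(lam * real CARD('n)) * (?M - (LINT v|lborel. v$k * v$l * kacQ F0 v))
      - \<mu> * (\<Sum>j\<in>UNIV. ?M - (LINT v|lborel. v$k * v$l * thermoR g j F0 v))"
    unfolding eq using i1 i2 i3 R2(1)[OF kl]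
    by (simp add: Bochner_Integration.integral_sum Bochner_Integration.integrable_sum)
  also have "\<dots> = -(lam * real CARD('n)) * (?M - ?q * ?M) - \<mu> * (\<Sum>j\<in>UNIV. if j = k \<or> j = l then ?M else 0)"
    unfolding kacQ_mom2(2)[OF kl] R2(2)[OF kl] by (intro arg_cong2[where f="(-)"] refl arg_cong2[where f="(*)"] sum.cong) auto
  also have "(\<Sum>j\<in>UNIV. if j = k \<or> j = l then ?M else 0) = 2 * ?M"
  proof -
    have "(\<Sum>j\<in>UNIV. if j = k \<or> j = l then ?M else 0) = (\<Sum>j\<in>{j\<in>UNIV. j = k \<or> j = l}. ?M)"
      by (rule sum.inter_filter[symmetric]) simp
    also have "\<dots> = (\<Sum>j\<in>{k,l}. ?M)" by (intro sum.cong) auto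
    also have "\<dots> = 2 * ?M" using kl by simp
    finally show ?thesis .
  qed
  also have "-(lam * real CARD('n)) * (?M - ?q * ?M) - \<mu> * (2 * ?M) = - (lam * real CARD('n) * (1 - ?q) + 2 * \<mu>) * ?M"
    by (simp add: algebra_simps)
  finally show ?thesis .
qed

end



lemma card_pairs_le:
  fixes Q :: "'n::{finite,linorder} \<times> 'n \<Rightarrow> bool"
  shows "card {p\<in>{(i,j). i < j}. Q p} \<le> CARD('n) choose 2"
proof -
  let ?P = "{(i,j). i < j} :: ('n \<times> 'n) set"
  have "bij_betw (\<lambda>p. {fst p, snd p}) ?P {B. B \<subseteq> (UNIV::'n set) \<and> card B = 2}"
  proof (rule bij_betwI')
    fix x y assume "x \<in> ?P" "y \<in> ?P"
    then show "({fst x, snd x} = {fst y, snd y}) = (x = y)"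
      by (cases x; cases y) (auto simp: doubleton_eq_iff)
  next
    fix x assume "x \<in> ?P" then show "{fst x, snd x} \<in> {B. B \<subseteq> UNIV \<and> card B = 2}" by auto
  next
    fix B assume "B \<in> {B. B \<subseteq> (UNIV::'n set) \<and> card B = 2}"
    then obtain a b where B: "B = {a,b}" "a \<noteq> b" by (auto simp: card_2_iff)
    show "\<exists>x\<in>?P. B = {fst x, snd x}"
    proof (cases "a < b")
      case True then show ?thesis using B by (intro bexI[of _ "(a,b)"]) auto
    next
      case False then have "b < a" using B by (simp add: not_less order.order_iff_strict)
      then show ?thesis using B by (intro bexI[of _ "(b,a)"]) auto
    qed
  qed
  then have "card ?P = CARD('n) choose 2"
    using bij_betw_same_card n_subsets[of "UNIV::'n set" 2] by fastforce
  moreover have "card {p\<in>?P. Q p} \<le> card ?P" by (intro card_mono) auto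
  ultimately show ?thesis by simp
qed

lemma q_le1:
  fixes Q :: "'n::{finite,linorder} \<times> 'n \<Rightarrow> bool"
  shows "real (card {p\<in>{(i,j). i < j}. Q p}) / real (CARD('n) choose 2) \<le> 1"
proof (cases "CARD('n) choose 2 = 0")
  case True then show ?thesis by (metis div_by_0 of_nat_0 zero_le_one)
next
  case False
  have "real (card {p\<in>{(i,j). i < j}. Q p}) \<le> real (CARD('n) choose 2)"
    using card_pairs_le[of Q] of_nat_le_iff by blast
  moreover have "0 < real (CARD('n) choose 2)" using False by simp
  ultimately show ?thesis by (simp add: divide_le_eq_1)
qed

lemma ode_exp:
  fixes m :: "real \<Rightarrow> real"
  assumes d: "\<And>t. t \<ge> 0 \<Longrightarrow> (m has_real_derivative (- c * m t)) (at t within {0..})"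
  shows "\<And>t. t \<ge> 0 \<Longrightarrow> m t = m 0 * exp (- c * t)"
proof -
  have "((\<lambda>t. m t * exp (c * t)) has_real_derivative 0) (at t within {0..})" if "t \<in> {0..}" for t
  proof -
    have dm: "(m has_real_derivative (-c*m t)) (at t within {0..})" using that d by auto
    have de: "((\<lambda>t. exp (c*t)) has_real_derivative exp (c*t) * c) (at t within {0..})"
      by (auto intro!: derivative_eq_intros)
    have "((\<lambda>t. m t * exp (c * t)) has_real_derivative (- c * m t) * exp (c * t) + (exp (c * t) * c) * m t) (at t within {0..})"
      using DERIV_mult[OF dm de] by simp
    then show ?thesis by (simp add: algebra_simps)
  qed
  then obtain C where C: "\<forall>x\<in>{0..}. m x * exp (c * x) = C"
    using has_field_derivative_zero_constant[of "{0::real..}" "\<lambda>t. m t * exp (c * t)"] by auto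
  fix t :: real assume t: "t \<ge> 0"
  have "m t * exp (c * t) = m 0" using C t by (metis atLeast_iff exp_zero mult_1_right mult_zero_right order_refl)
  then have "m t = m 0 * exp (- (c * t))" by (simp add: exp_minus field_simps)
  then show "m t = m 0 * exp (- c * t)" by simp
qed

lemma moment_deriv:
  fixes F :: "real \<Rightarrow> real^('n::{finite,linorder}) \<Rightarrow> real" and \<phi> :: "real^'n::{finite,linorder} \<Rightarrow> real"
  assumes sol: "kac_solution lam \<mu> g F" and t: "t \<ge> 0"
    and \<phi>m[measurable]: "\<phi> \<in> borel_measurable borel" and \<phi>b: "\<And>v. \<bar>\<phi> v\<bar> \<le> 1 + (norm v)\<^sup>2"
  shows "((\<lambda>s. LINT v|lborel. \<phi> v * F s v) has_real_derivative (LINT v|lborel. \<phi> v * kac_gen lam \<mu> g (F t) v)) (at t within {0..})"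
proof -
  define G where "G = kac_gen lam \<mu> g (F t)"
  define m where "m = (\<lambda>s. LINT v|lborel. \<phi> v * F s v)"
  define D where "D = (LINT v|lborel. \<phi> v * G v)"
  note S = sol[unfolded kac_solution_def]
  have Fi: "integrable lborel (F s)" and F2: "integrable lborel (\<lambda>v. (norm v)\<^sup>2 * F s v)" and Fnn: "\<And>v. 0 \<le> F s v"
    if "s \<ge> 0" for s using S that by auto
  have FW: "integrable lborel (\<lambda>v. (1 + (norm v)\<^sup>2) * F s v)" if "s \<ge> 0" for s
    using Fi[OF that] F2[OF that] by (simp add: distrib_right)
  have Fm: "F s \<in> borel_measurable borel" if "s \<ge> 0" for s
    using Fi[OF that] by (metis borel_measurable_integrable measurable_lborel2)
  have GW: "integrable lborel (\<lambda>v. (1 + (norm v)\<^sup>2) * G v)" using S t by (simp add: G_def)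
  have lim: "((\<lambda>s. (LINT v|lborel. (1 + (norm v)\<^sup>2) * \<bar>F s v - F t v - (s - t) * G v\<bar>) / \<bar>s - t\<bar>) \<longlongrightarrow> 0) (at t within {0..})"
    using S t by (simp add: G_def)
  have iphiF: "integrable lborel (\<lambda>v. \<phi> v * F s v)" if "s \<ge> 0" for s
    by (rule int_bound_W[OF \<phi>m Fm[OF that] FW[OF that] Fnn[OF that], of 1]) (simp add: \<phi>b)
  have Gm: "G \<in> borel_measurable borel"
  proof -
    have "(\<lambda>v. (1 + (norm v)\<^sup>2) * G v) \<in> borel_measurable borel"
      using borel_measurable_integrable[OF GW] by simp
    then have "(\<lambda>v. ((1 + (norm v)\<^sup>2) * G v) / (1 + (norm v)\<^sup>2)) \<in> borel_measurable borel" by measurable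
    moreover have "(\<lambda>v. ((1 + (norm v)\<^sup>2) * G v) / (1 + (norm v)\<^sup>2)) = G"
    proof
      fix v :: "real^'n::{finite,linorder}" have "0 < 1 + (norm v)\<^sup>2" by (simp add: add_pos_nonneg)
      then have "1 + (norm v)\<^sup>2 \<noteq> 0" by linarith
      then show "((1 + (norm v)\<^sup>2) * G v) / (1 + (norm v)\<^sup>2) = G v" by simp
    qed
    ultimately show ?thesis by simp
  qed
  have iphiG: "integrable lborel (\<lambda>v. \<phi> v * G v)"
  proof (rule Bochner_Integration.integrable_bound[OF GW])
    show "(\<lambda>v. \<phi> v * G v) \<in> borel_measurable lborel" using Gm by measurable
    show "AE v in lborel. norm (\<phi> v * G v) \<le> norm ((1 + (norm v)\<^sup>2) * G v)"
    proof (rule AE_I2)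
      fix v :: "real^'n::{finite,linorder}"
      have "\<bar>\<phi> v\<bar> * \<bar>G v\<bar> \<le> (1 + (norm v)\<^sup>2) * \<bar>G v\<bar>" by (intro mult_right_mono \<phi>b) simp
      then show "norm (\<phi> v * G v) \<le> norm ((1 + (norm v)\<^sup>2) * G v)" by (simp add: abs_mult)
    qed
  qed
  have bound: "\<bar>(m s - m t) / (s - t) - D\<bar> \<le> (LINT v|lborel. (1 + (norm v)\<^sup>2) * \<bar>F s v - F t v - (s - t) * G v\<bar>) / \<bar>s - t\<bar>"
    if s: "s \<ge> 0" "s \<noteq> t" for s
  proof -
    have e1: "m s - m t - (s - t) * D = (LINT v|lborel. \<phi> v * F s v - \<phi> v * F t v - (s - t) * (\<phi> v * G v))"
      unfolding m_def D_def using iphiF[OF s(1)] iphiF[OF t] iphiG by simp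
    have i2: "integrable lborel (\<lambda>v. (1 + (norm v)\<^sup>2) * \<bar>F s v - F t v - (s - t) * G v\<bar>)"
    proof -
      have "integrable lborel (\<lambda>v. \<bar>(1 + (norm v)\<^sup>2) * F s v - (1 + (norm v)\<^sup>2) * F t v - (s - t) * ((1 + (norm v)\<^sup>2) * G v)\<bar>)"
        using FW[OF s(1)] FW[OF t] GW by auto
      moreover have "(\<lambda>v. \<bar>(1 + (norm v)\<^sup>2) * F s v - (1 + (norm v)\<^sup>2) * F t v - (s - t) * ((1 + (norm v)\<^sup>2) * G v)\<bar>)
          = (\<lambda>v. (1 + (norm v)\<^sup>2) * \<bar>F s v - F t v - (s - t) * G v\<bar>)"
      proof
        fix v :: "real^'n::{finite,linorder}"
        have p: "0 \<le> 1 + (norm v)\<^sup>2" by simp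
        have "(1 + (norm v)\<^sup>2) * F s v - (1 + (norm v)\<^sup>2) * F t v - (s - t) * ((1 + (norm v)\<^sup>2) * G v)
            = (1 + (norm v)\<^sup>2) * (F s v - F t v - (s - t) * G v)" by (simp add: algebra_simps)
        then show "\<bar>(1 + (norm v)\<^sup>2) * F s v - (1 + (norm v)\<^sup>2) * F t v - (s - t) * ((1 + (norm v)\<^sup>2) * G v)\<bar>
            = (1 + (norm v)\<^sup>2) * \<bar>F s v - F t v - (s - t) * G v\<bar>" using p by (simp add: abs_mult)
      qed
      ultimately show ?thesis by simp
    qed
    have i1: "integrable lborel (\<lambda>v. \<phi> v * F s v - \<phi> v * F t v - (s - t) * (\<phi> v * G v))"
      using iphiF[OF s(1)] iphiF[OF t] iphiG by auto
    have "\<bar>m s - m t - (s - t) * D\<bar> \<le> (LINT v|lborel. (1 + (norm v)\<^sup>2) * \<bar>F s v - F t v - (s - t) * G v\<bar>)"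
      unfolding e1
    proof (rule integral_abs_bound_integral[OF i1 i2])
      fix v :: "real^'n::{finite,linorder}"
      have "\<bar>\<phi> v * F s v - \<phi> v * F t v - (s - t) * (\<phi> v * G v)\<bar> = \<bar>\<phi> v\<bar> * \<bar>F s v - F t v - (s - t) * G v\<bar>"
        by (simp add: abs_mult[symmetric] algebra_simps)
      also have "\<dots> \<le> (1 + (norm v)\<^sup>2) * \<bar>F s v - F t v - (s - t) * G v\<bar>" by (intro mult_right_mono \<phi>b) simp
      finally show "\<bar>\<phi> v * F s v - \<phi> v * F t v - (s - t) * (\<phi> v * G v)\<bar> \<le> (1 + (norm v)\<^sup>2) * \<bar>F s v - F t v - (s - t) * G v\<bar>" .
    qed
    moreover have "(m s - m t) / (s - t) - D = (m s - m t - (s - t) * D) / (s - t)"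
      using s by (simp add: field_simps)
    ultimately show ?thesis using s by (simp add: abs_divide divide_right_mono)
  qed
  have "((\<lambda>s. (m s - m t) / (s - t) - D) \<longlongrightarrow> 0) (at t within {0..})"
  proof (rule Lim_null_comparison[OF _ lim])
    show "\<forall>\<^sub>F s in at t within {0..}. norm ((m s - m t) / (s - t) - D)
       \<le> (LINT v|lborel. (1 + (norm v)\<^sup>2) * \<bar>F s v - F t v - (s - t) * G v\<bar>) / \<bar>s - t\<bar>"
      unfolding eventually_at_filter by (intro always_eventually allI impI) (simp add: bound)
  qed
  then have "((\<lambda>s. (m s - m t) / (s - t)) \<longlongrightarrow> D) (at t within {0..})" by (simp add: Lim_null[symmetric])
  then show ?thesis unfolding has_field_derivative_iff m_def D_def G_def .
qed

lemma decay:
  fixes m :: "real \<Rightarrow> real"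
  assumes d: "\<And>t. t \<ge> 0 \<Longrightarrow> (m has_real_derivative (- c * m t)) (at t within {0..})"
    and c: "c \<ge> \<mu>" and t: "t \<ge> 0"
  shows "\<bar>m t\<bar> \<le> \<bar>m 0\<bar> * exp (- \<mu> * t)"
proof -
  have "m t = m 0 * exp (- c * t)" by (rule ode_exp[OF d t])
  then have "\<bar>m t\<bar> = \<bar>m 0\<bar> * exp (- c * t)" by (simp add: abs_mult)
  also have "\<dots> \<le> \<bar>m 0\<bar> * exp (- \<mu> * t)"
    using c t by (intro mult_left_mono) (auto intro: mult_right_mono)
  finally show ?thesis .
qed

lemma comp2_le_W: "\<bar>(u::real^'n::{finite,linorder})$k * u$l\<bar> \<le> 1 + (norm u)\<^sup>2"
proof -
  have "\<bar>u$k * u$l\<bar> \<le> ((u$k)\<^sup>2 + (u$l)\<^sup>2)/2"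
    using sum_squares_bound[of "\<bar>u$k\<bar>" "\<bar>u$l\<bar>"] by (simp add: abs_mult)
  also have "\<dots> \<le> 1 + (norm u)\<^sup>2" using comp_sq_le_W[of u k] comp_sq_le_W[of u l] by simp
  finally show ?thesis .
qed

lemma sol_dens:
  fixes F :: "real \<Rightarrow> real^('n::{finite,linorder}) \<Rightarrow> real"
  assumes sol: "kac_solution lam \<mu> g F" and g: "thermostat_density g" and t: "t \<ge> 0"
  shows "dens_g (F t) g"
proof -
  note S = sol[unfolded kac_solution_def, rule_format, OF t]
  note G = g[unfolded thermostat_density_def]
  show ?thesis
  proof (unfold_locales)
    show "F t \<in> borel_measurable borel" using S by (metis borel_measurable_integrable measurable_lborel2)
    show "g \<in> borel_measurable borel" using G by (metis borel_measurable_integrable measurable_lborel2)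
  qed (use S G in auto)
qed

theorem lemma2:
  fixes F :: "real \<Rightarrow> real^('n::{finite,linorder}) \<Rightarrow> real"
    and lam \<mu> :: real and g :: "real \<Rightarrow> real"
  assumes "CARD('n) \<ge> 2" and "lam > 0" and "\<mu> > 0"
    and "thermostat_density g"
    and "kac_solution lam \<mu> g F"
  shows "(\<exists>r > \<mu> / 2. \<exists>C. \<forall>k. \<forall>t\<ge>0.
            \<bar>LINT v|lborel. v $ k * F t v\<bar> \<le> C * exp (- r * t))
       \<and> (\<exists>r > \<mu> / 2. \<exists>C. \<forall>k l. k \<noteq> l \<longrightarrow> (\<forall>t\<ge>0.
            \<bar>LINT v|lborel. v $ k * v $ l * F t v\<bar> \<le> C * exp (- r * t)))"
proof -
  note lam = assms(2) and mu = assms(3) and gd = assms(4) and sol = assms(5)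
  have qnn: "0 \<le> lam * real CARD('n) * (1 - real (card {p\<in>{(i,j). i < j}. Q p}) / real (CARD('n) choose 2))"
    for Q :: "'n \<times> 'n \<Rightarrow> bool"
    using q_le1[of Q] lam by simp
  have first: "\<bar>LINT v|lborel. v $ k * F t v\<bar> \<le> \<bar>LINT v|lborel. v $ k * F 0 v\<bar> * exp (- \<mu> * t)" if t: "t \<ge> 0" for k t
  proof -
    let ?c = "lam * real CARD('n) * (1 - real (card {p\<in>{(i,j). i < j}. \<not> (k = fst p \<or> k = snd p)}) / real (CARD('n) choose 2)) + \<mu>"
    have d: "((\<lambda>s. LINT v|lborel. v $ k * F s v) has_real_derivative (- ?c * (LINT v|lborel. v $ k * F s v))) (at s within {0..})"
      if s: "s \<ge> 0" for s
    proof -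
      interpret dens_g "F s" g by (rule sol_dens[OF sol gd s])
      have m: "(\<lambda>v::real^'n::{finite,linorder}. v $ k) \<in> borel_measurable borel" by measurable
      show ?thesis using moment_deriv[OF sol s m comp_le_W] gen1[of k lam \<mu>] by simp
    qed
    show ?thesis by (rule decay[OF d _ t]) (use qnn in auto)
  qed
  have second: "\<bar>LINT v|lborel. v $ k * v $ l * F t v\<bar> \<le> \<bar>LINT v|lborel. v $ k * v $ l * F 0 v\<bar> * exp (- \<mu> * t)"
    if t: "t \<ge> 0" and kl: "k \<noteq> l" for k l t
  proof -
    let ?c = "lam * real CARD('n) * (1 - real (card {p\<in>{(i,j). i < j}. \<not> (k = fst p \<or> k = snd p \<or> l = fst p \<or> l = snd p)}) / real (CARD('n) choose 2)) + 2 * \<mu>"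
    have d: "((\<lambda>s. LINT v|lborel. v $ k * v $ l * F s v) has_real_derivative (- ?c * (LINT v|lborel. v $ k * v $ l * F s v))) (at s within {0..})"
      if s: "s \<ge> 0" for s
    proof -
      interpret dens_g "F s" g by (rule sol_dens[OF sol gd s])
      have m: "(\<lambda>v::real^'n::{finite,linorder}. v $ k * v $ l) \<in> borel_measurable borel" by measurable
      show ?thesis using moment_deriv[OF sol s m comp2_le_W] gen2[OF kl, of lam \<mu>] by (simp add: mult.assoc)
    qed
    show ?thesis by (rule decay[OF d _ t]) (use qnn[of "\<lambda>p. \<not> (k = fst p \<or> k = snd p \<or> l = fst p \<or> l = snd p)"] mu in auto)
  qed
  have mu2: "\<mu> / 2 < \<mu>" using mu by simp
  define C1 where "C1 = (\<Sum>k\<in>UNIV. \<bar>LINT v|lborel. v $ k * F 0 v\<bar>)"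
  define C2 where "C2 = (\<Sum>k\<in>UNIV. \<Sum>l\<in>UNIV. \<bar>LINT v|lborel. v $ k * v $ l * F 0 v\<bar>)"
  have A: "\<forall>k. \<forall>t\<ge>0. \<bar>LINT v|lborel. v $ k * F t v\<bar> \<le> C1 * exp (- \<mu> * t)"
  proof (intro allI impI)
    fix k :: 'n and t :: real assume t: "0 \<le> t"
    have "\<bar>LINT v|lborel. v $ k * F 0 v\<bar> \<le> C1" unfolding C1_def
      by (rule member_le_sum) auto
    then show "\<bar>LINT v|lborel. v $ k * F t v\<bar> \<le> C1 * exp (- \<mu> * t)"
      using first[OF t, of k] by (meson exp_gt_zero less_imp_le mult_right_mono order_trans)
  qed
  have B: "\<forall>k l. k \<noteq> l \<longrightarrow> (\<forall>t\<ge>0. \<bar>LINT v|lborel. v $ k * v $ l * F t v\<bar> \<le> C2 * exp (- \<mu> * t))"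
  proof (intro allI impI)
    fix k l :: 'n and t :: real assume kl: "k \<noteq> l" and t: "0 \<le> t"
    have "\<bar>LINT v|lborel. v $ k * v $ l * F 0 v\<bar> \<le> (\<Sum>l\<in>UNIV. \<bar>LINT v|lborel. v $ k * v $ l * F 0 v\<bar>)"
      by (rule member_le_sum) auto
    also have "\<dots> \<le> C2" unfolding C2_def
      by (rule member_le_sum[where f="\<lambda>k. \<Sum>l\<in>UNIV. \<bar>LINT v|lborel. v $ k * v $ l * F 0 v\<bar>"]) (auto intro: sum_nonneg)
    finally have "\<bar>LINT v|lborel. v $ k * v $ l * F 0 v\<bar> \<le> C2" .
    then show "\<bar>LINT v|lborel. v $ k * v $ l * F t v\<bar> \<le> C2 * exp (- \<mu> * t)"
      using second[OF t kl] by (meson exp_gt_zero less_imp_le mult_right_mono order_trans)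
  qed
  show ?thesis using A B mu2 by blast
qed


end
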